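(* Let $A$ be a set with $1\leq|A|\leq\omega$, and suppose that for each $\alpha\in A$, either $X_\alpha=\mathcal{N}$, or $X_\alpha$ is a subspace of $\mathcal{R}_{\mathcal{S}}$ with $|\mathcal{R}_{\mathcal{S}}\setminus X_\alpha|\leq\omega$. Then the Tychonoff product $\prod_{\alpha\in A}X_\alpha$ has a $\pi$-tree.
   Context: $\mathcal{N}$ is the Baire space ${}^{\omega}\omega$ with the product topology ($\omega$ discrete); $\mathcal{R}_{\mathcal{S}}$ is the Sorgenfrey line (reals with the topology generated by $[a,b)$). Neighbourhoods are not necessarily open. ${}^{<\omega}\omega$ is the set of finite sequences of natural numbers. A tree is a strict partial order in which the set of predecessors of every node is well-ordered; a branch is a maximal chain; $\mathrm{sons}(x)$ is the set of immediate successors of $x$; $0$ denotes the least node. A foliage tree is a pair $\mathbf{F}=(T,l)$ with $T$ a tree (skeleton) and $l$ a function on its nodes, $\mathbf{F}_x:=l(x)$; tree notions apply via the skeleton. $\mathrm{shoot}_{\mathbf{F}}(v)=\{\bigcup_{x\in C}\mathbf{F}_x: C\text{ a cofinite subset of }\mathrm{sons}_{\mathbf{F}}(v)\}$; $\mathrm{scope}_{\mathbf{F}}(p)=\{x:p\in\mathbf{F}_x\}$. $\gamma\gg\delta$ means every nonempty $D\in\delta$ contains some nonempty $G\in\gamma$. $\mathbf{F}$ is locally strict if each non-maximal leaf $\mathbf{F}_x$ is the disjoint union of $\mathbf{F}_s$, $s\in\mathrm{sons}(x)$; has strict branches if it has a node and for each branch $B$, $\bigcap_{x\in B}\mathbf{F}_x$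 is a singleton; is open in $X$ if all leaves are open in $X$; is a foliage $\omega,\omega$-tree if its skeleton is order-isomorphic to $({}^{<\omega}\omega,\subsetneq)$. A Baire foliage tree on $X$ is an open in $X$, locally strict foliage $\omega,\omega$-tree with strict branches and $\mathbf{F}_{0_{\mathbf{F}}}=X$. $\mathbf{F}$ grows into $X$ if for every $p\in X$ and neighbourhood $U$ of $p$ there is $z\in\mathrm{scope}_{\mathbf{F}}(p)$ with $\mathrm{shoot}_{\mathbf{F}}(z)\gg\{U\}$. A $\pi$-tree on $X$ is a Baire foliage tree on $X$ that grows into $X$; a space has a $\pi$-tree if there is one on it. *)

theory Defs
  imports "HOL-Analysis.Analysis"
begin

text \<open>Skeleton: the tree of finite sequences of naturals ordered by strict prefix.
  A foliage omega,omega-tree is represented by its leaf function on nat lists.\<close>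

definition tree_less :: "nat list \<Rightarrow> nat list \<Rightarrow> bool" where
  "tree_less x y \<longleftrightarrow> (\<exists>zs. zs \<noteq> [] \<and> y = x @ zs)"

definition sons :: "nat list \<Rightarrow> nat list set" where
  "sons v = {v @ [n] | n. True}"

definition is_chain :: "nat list set \<Rightarrow> bool" where
  "is_chain C \<longleftrightarrow> (\<forall>x\<in>C. \<forall>y\<in>C. x = y \<or> tree_less x y \<or> tree_less y x)"

definition is_branch :: "nat list set \<Rightarrow> bool" where
  "is_branch B \<longleftrightarrow> is_chain B \<and> (\<forall>C. is_chain C \<and> B \<subseteq> C \<longrightarrow> C = B)"

definition shoot :: "(nat list \<Rightarrow> 'a set) \<Rightarrow> nat list \<Rightarrow> 'a set set" where
  "shoot F v = {\<Union>x\<in>C. F x | C. C \<subseteq> sons v \<and> finite (sons v - C)}"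

definition scope :: "(nat list \<Rightarrow> 'a set) \<Rightarrow> 'a \<Rightarrow> nat list set" where
  "scope F p = {x. p \<in> F x}"

definition refines :: "'a set set \<Rightarrow> 'a set set \<Rightarrow> bool" (infix "\<ggreater>" 50) where
  "\<gamma> \<ggreater> \<delta> \<longleftrightarrow> (\<forall>D\<in>\<delta>. D \<noteq> {} \<longrightarrow> (\<exists>G\<in>\<gamma>. G \<noteq> {} \<and> G \<subseteq> D))"

definition locally_strict :: "(nat list \<Rightarrow> 'a set) \<Rightarrow> bool" where
  "locally_strict F \<longleftrightarrow> (\<forall>x. F x = (\<Union>s\<in>sons x. F s) \<and>
      (\<forall>s\<in>sons x. \<forall>t\<in>sons x. s \<noteq> t \<longrightarrow> F s \<inter> F t = {}))"

definition strict_branches :: "(nat list \<Rightarrow> 'a set) \<Rightarrow> bool" where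
  "strict_branches F \<longleftrightarrow> (\<forall>B. is_branch B \<longrightarrow> (\<exists>p. (\<Inter>x\<in>B. F x) = {p}))"

definition baire_foliage_tree :: "'a topology \<Rightarrow> (nat list \<Rightarrow> 'a set) \<Rightarrow> bool" where
  "baire_foliage_tree X F \<longleftrightarrow> (\<forall>x. openin X (F x)) \<and> locally_strict F \<and>
      strict_branches F \<and> F [] = topspace X"

definition is_nbhd :: "'a topology \<Rightarrow> 'a set \<Rightarrow> 'a \<Rightarrow> bool" where
  "is_nbhd X U p \<longleftrightarrow> U \<subseteq> topspace X \<and> (\<exists>V. openin X V \<and> p \<in> V \<and> V \<subseteq> U)"

definition grows_into :: "(nat list \<Rightarrow> 'a set) \<Rightarrow> 'a topology \<Rightarrow> bool" where
  "grows_into F X \<longleftrightarrow> (\<forall>p\<in>topspace X. \<forall>U. is_nbhd X U p \<longrightarrow>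
      (\<exists>z\<in>scope F p. shoot F z \<ggreater> {U}))"

definition pi_tree :: "'a topology \<Rightarrow> (nat list \<Rightarrow> 'a set) \<Rightarrow> bool" where
  "pi_tree X F \<longleftrightarrow> baire_foliage_tree X F \<and> grows_into F X"

definition has_pi_tree :: "'a topology \<Rightarrow> bool" where
  "has_pi_tree X \<longleftrightarrow> (\<exists>F. pi_tree X F)"

definition baire_space :: "(nat \<Rightarrow> nat) topology" where
  "baire_space = product_topology (\<lambda>_. discrete_topology UNIV) UNIV"

definition sorgenfrey :: "real topology" where
  "sorgenfrey = topology_generated_by {{a..<b} | a b. True}"

end

theory Submission
  imports Defs "HOL-Library.Nat_Bijection"
begin


definition ST :: "'x topology \<Rightarrow> (nat list \<Rightarrow> 'x set) \<Rightarrow> bool" where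
 "ST X F \<longleftrightarrow> (\<forall>s. openin X (F s)) \<and> F [] = topspace X \<and> (\<forall>s. F s \<noteq> {}) \<and>
   (\<forall>s. F s = (\<Union>k. F (s@[k]))) \<and> (\<forall>s k l. k \<noteq> l \<longrightarrow> F (s@[k]) \<inter> F (s@[l]) = {}) \<and>
   (\<forall>g. \<exists>p. (\<Inter>n. F (map g [0..<n])) = {p}) \<and>
   (\<forall>p\<in>topspace X. \<forall>V. openin X V \<and> p \<in> V \<longrightarrow>
      (\<exists>D. \<forall>s. D \<le> length s \<and> even (length s) \<and> p \<in> F s \<longrightarrow> (\<exists>N. \<forall>k\<ge>N. F (s@[k]) \<subseteq> V)))"

lemma ST_D1: "ST X F \<Longrightarrow> \<forall>s. openin X (F s)"
  unfolding ST_def by (elim conjE) assumption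
lemma ST_D2: "ST X F \<Longrightarrow> F [] = topspace X"
  unfolding ST_def by (elim conjE) assumption
lemma ST_D3: "ST X F \<Longrightarrow> \<forall>s. F s \<noteq> {}"
  unfolding ST_def by (elim conjE) assumption
lemma ST_D4: "ST X F \<Longrightarrow> \<forall>s. F s = (\<Union>k. F (s@[k]))"
  unfolding ST_def by (elim conjE) assumption
lemma ST_D5: "ST X F \<Longrightarrow> \<forall>s k l. k \<noteq> l \<longrightarrow> F (s@[k]) \<inter> F (s@[l]) = {}"
  unfolding ST_def by (elim conjE) assumption
lemma ST_D6: "ST X F \<Longrightarrow> \<forall>g. \<exists>p. (\<Inter>n. F (map g [0..<n])) = {p}"
  unfolding ST_def by (elim conjE) assumption
lemma ST_D7: "ST X F \<Longrightarrow> \<forall>p\<in>topspace X. \<forall>V. openin X V \<and> p \<in> V \<longrightarrow>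
      (\<exists>D. \<forall>s. D \<le> length s \<and> even (length s) \<and> p \<in> F s \<longrightarrow> (\<exists>N. \<forall>k\<ge>N. F (s@[k]) \<subseteq> V))"
  unfolding ST_def by (elim conjE) assumption

lemma ST_open: "ST X F \<Longrightarrow> openin X (F s)" using ST_D1 by blast
lemma ST_root: "ST X F \<Longrightarrow> F [] = topspace X" using ST_D2 by blast
lemma ST_ne: "ST X F \<Longrightarrow> F s \<noteq> {}" using ST_D3 by blast
lemma ST_union: "ST X F \<Longrightarrow> F s = (\<Union>k. F (s@[k]))" by (drule ST_D4, erule spec)
lemma ST_disj: "ST X F \<Longrightarrow> k \<noteq> l \<Longrightarrow> F (s@[k]) \<inter> F (s@[l]) = {}" using ST_D5 by blast
lemma ST_branch: "ST X F \<Longrightarrow> \<exists>p. (\<Inter>n. F (map g [0..<n])) = {p}" by (drule ST_D6, erule spec)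
lemma ST_grow: "ST X F \<Longrightarrow> p \<in> topspace X \<Longrightarrow> openin X V \<Longrightarrow> p \<in> V \<Longrightarrow>
      (\<exists>D. \<forall>s. D \<le> length s \<and> even (length s) \<and> p \<in> F s \<longrightarrow> (\<exists>N. \<forall>k\<ge>N. F (s@[k]) \<subseteq> V))"
  using ST_D7 by blast

lemma ST_nested: assumes "ST X F" shows "F (s@t) \<subseteq> F s"
proof (induction t rule: rev_induct)
  case Nil then show ?case by simp
next
  case (snoc x xs)
  have "F ((s @ xs) @ [x]) \<subseteq> (\<Union>k. F ((s@xs)@[k]))" by (rule UN_upper) simp
  also have "\<dots> = F (s@xs)" by (rule ST_union[OF assms, symmetric])
  finally have "F (s @ xs @ [x]) \<subseteq> F (s@xs)" by simp
  then show ?case using snoc by simp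
qed

lemma ST_sub_top: assumes "ST X F" shows "F s \<subseteq> topspace X"
  using ST_open[OF assms] by (meson openin_subset)

lemma ST_disj2: assumes "ST X F" "(k,l) \<noteq> (k',l')"
  shows "F (s@[k,l]) \<inter> F (s@[k',l']) = {}"
proof (cases "k = k'")
  case True
  then have "l \<noteq> l'" using assms by auto
  then have "F ((s@[k])@[l]) \<inter> F ((s@[k])@[l']) = {}" by (rule ST_disj[OF assms(1)])
  then show ?thesis using True by simp
next
  case False
  have "F ((s@[k])@[l]) \<subseteq> F (s@[k])" "F ((s@[k'])@[l']) \<subseteq> F (s@[k'])"
    by (rule ST_nested[OF assms(1)])+
  moreover have "F (s@[k]) \<inter> F (s@[k']) = {}" using False by (rule ST_disj[OF assms(1)])
  ultimately show ?thesis by auto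
qed

lemma ST_cover2: assumes "ST X F" "x \<in> F s" shows "\<exists>k l. x \<in> F (s@[k,l])"
proof -
  have "x \<in> (\<Union>k. F (s@[k]))" using assms(2) ST_union[OF assms(1), of s] by simp
  then obtain k where "x \<in> F (s@[k])" by blast
  then have "x \<in> (\<Union>l. F ((s@[k])@[l]))" using ST_union[OF assms(1), of "s@[k]"] by simp
  then obtain l where "x \<in> F ((s@[k])@[l])" by blast
  then show ?thesis by auto
qed

lemma chain_inter:
  fixes \<sigma> :: "nat \<Rightarrow> nat list"
  assumes "ST X F" and mono: "\<And>n m. n \<le> m \<Longrightarrow> \<exists>t. \<sigma> m = \<sigma> n @ t"
    and unb: "\<And>k. \<exists>m. k \<le> length (\<sigma> m)"
  shows "\<exists>p. (\<Inter>n. F (\<sigma> n)) = {p}"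
proof -
  have comp: "take k (\<sigma> n) = take k (\<sigma> m)" if "k \<le> length (\<sigma> n)" "k \<le> length (\<sigma> m)" for k n m
  proof (cases "n \<le> m")
    case True then obtain t where "\<sigma> m = \<sigma> n @ t" using mono by blast
    then show ?thesis using that by simp
  next
    case False then obtain t where "\<sigma> n = \<sigma> m @ t" using mono[of m n] by auto
    then show ?thesis using that by simp
  qed
  define M where "M k = (SOME m. k \<le> length (\<sigma> m))" for k
  have M: "k \<le> length (\<sigma> (M k))" for k unfolding M_def using unb by (meson someI_ex)
  define g where "g i = \<sigma> (M (Suc i)) ! i" for i
  have take_eq: "take k (\<sigma> m) = map g [0..<k]" if "k \<le> length (\<sigma> m)" for k m
  proof (rule nth_equalityI)
    show "length (take k (\<sigma> m)) = length (map g [0..<k])" using that by simp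
    fix i assume "i < length (take k (\<sigma> m))"
    then have i: "i < k" by simp
    have "take (Suc i) (\<sigma> m) = take (Suc i) (\<sigma> (M (Suc i)))"
      using comp[of "Suc i" m "M (Suc i)"] M[of "Suc i"] i that by simp
    then have "\<sigma> m ! i = \<sigma> (M (Suc i)) ! i"
      by (metis lessI nth_take)
    then show "take k (\<sigma> m) ! i = map g [0..<k] ! i" using i that by (simp add: g_def)
  qed
  have nest: "\<And>s t. F (s@t) \<subseteq> F s" by (rule ST_nested[OF assms(1)])
  obtain p where p: "(\<Inter>k. F (map g [0..<k])) = {p}" using ST_branch[OF assms(1)] by blast
  have "(\<Inter>n. F (\<sigma> n)) = (\<Inter>k. F (map g [0..<k]))"
  proof
    show "(\<Inter>n. F (\<sigma> n)) \<subseteq> (\<Inter>k. F (map g [0..<k]))"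
    proof (rule INT_greatest)
      fix k
      have "F (\<sigma> (M k)) \<subseteq> F (take k (\<sigma> (M k)))"
        using nest[of "take k (\<sigma> (M k))" "drop k (\<sigma> (M k))"] by simp
      moreover have "(\<Inter>n. F (\<sigma> n)) \<subseteq> F (\<sigma> (M k))" by (rule INT_lower) simp
      ultimately show "(\<Inter>n. F (\<sigma> n)) \<subseteq> F (map g [0..<k])" using take_eq[OF M[of k]] by simp
    qed
    show "(\<Inter>k. F (map g [0..<k])) \<subseteq> (\<Inter>n. F (\<sigma> n))"
    proof (rule INT_greatest)
      fix n
      have "map g [0..<length (\<sigma> n)] = \<sigma> n" using take_eq[of "length (\<sigma> n)" n] by simp
      moreover have "(\<Inter>k. F (map g [0..<k])) \<subseteq> F (map g [0..<length (\<sigma> n)])" by (rule INT_lower) simp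
      ultimately show "(\<Inter>k. F (map g [0..<k])) \<subseteq> F (\<sigma> n)" by simp
    qed
  qed
  then have "(\<Inter>n. F (\<sigma> n)) = {p}" using p by simp
  then show ?thesis by (rule exI)
qed



lemma chain_comp: assumes "is_chain B" "x \<in> B" "y \<in> B"
  shows "x = y \<or> (\<exists>zs. y = x @ zs) \<or> (\<exists>zs. x = y @ zs)"
  using assms unfolding is_chain_def tree_less_def by blast

lemma chain_take: assumes "is_chain B" "x \<in> B" "y \<in> B" "k \<le> length x" "k \<le> length y"
  shows "take k x = take k y"
  using chain_comp[OF assms(1-3)] assms(4,5) by auto

lemma chain_insert: "is_chain B \<Longrightarrow> (\<forall>c\<in>B. c = t \<or> tree_less c t \<or> tree_less t c) \<Longrightarrow> is_chain (insert t B)"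
  unfolding is_chain_def by auto

lemma branch_take: assumes "is_branch B" "y \<in> B" shows "take n y \<in> B"
proof -
  have ch: "is_chain B" using assms(1) unfolding is_branch_def by blast
  have "is_chain (insert (take n y) B)"
  proof (rule chain_insert[OF ch], intro ballI)
    show "c = take n y \<or> tree_less c (take n y) \<or> tree_less (take n y) c" if "c \<in> B" for c
    proof -
      from chain_comp[OF ch that assms(2)]
      consider "c = y" | zs where "y = c @ zs" | zs where "c = y @ zs" by blast
      then show ?thesis
      proof cases
        case 1
        have e: "c = take n y @ drop n y" using 1 by simp
        show ?thesis
        proof (cases "drop n y = []")
          case True then show ?thesis using e by simp
        next
          case False then show ?thesis using e unfolding tree_less_def by blast
        qed
      next
        case (2 zs)
        show ?thesis
        proof (cases "length c \<le> n")
          case True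
          then have "take n y = c @ take (n - length c) zs" using 2 by simp
          then show ?thesis unfolding tree_less_def by (cases "take (n - length c) zs = []") auto
        next
          case False
          then have "take n y = take n c" using 2 by simp
          moreover have "c = take n c @ drop n c" "drop n c \<noteq> []" using False by simp_all
          ultimately show ?thesis unfolding tree_less_def by metis
        qed
      next
        case (3 zs)
        then have "c = take n y @ (drop n y @ zs)" by simp
        then show ?thesis unfolding tree_less_def by (cases "drop n y @ zs = []") auto
      qed
    qed
  qed
  moreover have "B \<subseteq> insert (take n y) B" by blast
  ultimately have "insert (take n y) B = B" using assms(1) unfolding is_branch_def by blast
  then show ?thesis by blast
qed

lemma branch_unbounded: assumes "is_branch B" shows "\<exists>y\<in>B. n \<le> length y"
proof (rule ccontr)
  assume "\<not> ?thesis"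
  then have bnd: "\<forall>y\<in>B. length y < n" by auto
  have ch: "is_chain B" using assms(1) unfolding is_branch_def by blast
  have "B \<noteq> {}"
  proof
    assume "B = {}"
    then have "is_chain {[]} \<and> B \<subseteq> {[]}" unfolding is_chain_def by auto
    then show False using assms `B = {}` unfolding is_branch_def by blast
  qed
  have fin: "finite (length ` B)" using bnd by (meson finite_lessThan finite_subset image_subsetI lessThan_iff)
  have "Max (length ` B) \<in> length ` B" using Max_in[OF fin] `B \<noteq> {}` by blast
  then obtain y where y: "y \<in> B" "length y = Max (length ` B)" by (metis imageE)
  have ymax: "length c \<le> length y" if "c \<in> B" for c using y fin that by simp
  have "is_chain (insert (y@[0]) B)"
  proof (rule chain_insert[OF ch], intro ballI)
    fix c assume that: "c \<in> B"
    have "tree_less c (y@[0])"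
    proof -
      from chain_comp[OF ch that y(1)] ymax[OF that]
      obtain zs where "y = c @ zs" by auto
      then have "y @ [0] = c @ (zs @ [0])" by simp
      then show ?thesis unfolding tree_less_def by blast
    qed
    then show "c = y@[0] \<or> tree_less c (y@[0]) \<or> tree_less (y@[0]) c" by blast
  qed
  moreover have "B \<subseteq> insert (y@[0]) B" by blast
  ultimately have "insert (y@[0]) B = B" using assms(1) unfolding is_branch_def by blast
  then have "y@[0] \<in> B" by blast
  from ymax[OF this] show False by simp
qed

lemma branch_seq: assumes "is_branch B" shows "\<exists>g. B = range (\<lambda>n. map g [0..<n])"
proof -
  have ch: "is_chain B" using assms(1) unfolding is_branch_def by blast
  define Y where "Y n = (SOME y. y \<in> B \<and> n \<le> length y)" for n
  have Y: "Y n \<in> B \<and> n \<le> length (Y n)" for n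
    unfolding Y_def by (rule someI_ex) (use branch_unbounded[OF assms, of n] in blast)
  define g where "g i = Y (Suc i) ! i" for i
  have key: "map g [0..<n] = take n y" if "y \<in> B" "n \<le> length y" for y n
  proof (rule nth_equalityI)
    show "length (map g [0..<n]) = length (take n y)" using that by simp
    fix i assume "i < length (map g [0..<n])"
    then have i: "i < n" by simp
    have "take (Suc i) y = take (Suc i) (Y (Suc i))"
      using chain_take[OF ch that(1), of "Y (Suc i)" "Suc i"] Y[of "Suc i"] i that by simp
    then have "y ! i = Y (Suc i) ! i" by (metis lessI nth_take)
    then show "map g [0..<n] ! i = take n y ! i" using i that by (simp add: g_def)
  qed
  show ?thesis
  proof (intro exI set_eqI iffI)
    fix x assume "x \<in> B"
    then have "x = map g [0..<length x]" using key[of x "length x"] by simp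
    then show "x \<in> range (\<lambda>n. map g [0..<n])" by blast
  next
    fix x assume "x \<in> range (\<lambda>n. map g [0..<n])"
    then obtain n where "x = map g [0..<n]" by blast
    then have "x = take n (Y n)" using key[of "Y n" n] Y[of n] by simp
    then show "x \<in> B" using branch_take[OF assms] Y[of n] by simp
  qed
qed

lemma pi_tree_intro:
  fixes T :: "nat list \<Rightarrow> 'x set"
  assumes op: "\<And>v. openin Y (T v)" and root: "T [] = topspace Y"
    and un: "\<And>v. T v = (\<Union>k. T (v@[k]))"
    and dj: "\<And>v k l. k \<noteq> l \<Longrightarrow> T (v@[k]) \<inter> T (v@[l]) = {}"
    and br: "\<And>g. \<exists>p. (\<Inter>n. T (map g [0..<n])) = {p}"
    and gr: "\<And>p U. p \<in> topspace Y \<Longrightarrow> openin Y U \<Longrightarrow> p \<in> U \<Longrightarrow>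
              \<exists>z N. p \<in> T z \<and> T (z@[N]) \<noteq> {} \<and> (\<forall>j\<ge>N. T (z@[j]) \<subseteq> U)"
  shows "has_pi_tree Y"
proof -
  have sons_eq: "sons v = range (\<lambda>n. v@[n])" for v unfolding sons_def by auto
  have ls: "locally_strict T"
    unfolding locally_strict_def
  proof (intro allI conjI ballI impI)
    fix x
    have "(\<Union>s\<in>sons x. T s) = (\<Union>k. T (x@[k]))" unfolding sons_eq by simp
    then show "T x = (\<Union>s\<in>sons x. T s)" by (rule trans[OF un[of x] sym])
  next
    fix x s t assume "s \<in> sons x" "t \<in> sons x" "s \<noteq> t"
    then obtain k l where "s = x@[k]" "t = x@[l]" "k \<noteq> l" unfolding sons_eq by auto
    then show "T s \<inter> T t = {}" using dj by simp
  qed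
  have sb: "strict_branches T"
    unfolding strict_branches_def
  proof (intro allI impI)
    fix B assume "is_branch B"
    then obtain g where g: "B = range (\<lambda>n. map g [0..<n])" using branch_seq by blast
    have "(\<Inter>x\<in>B. T x) = (\<Inter>n. T (map g [0..<n]))" unfolding g by simp
    then show "\<exists>p. (\<Inter>x\<in>B. T x) = {p}" using br[of g] by simp
  qed
  have gi: "grows_into T Y"
    unfolding grows_into_def
  proof (intro ballI allI impI)
    fix p U assume p: "p \<in> topspace Y" and U: "is_nbhd Y U p"
    then obtain V where V: "openin Y V" "p \<in> V" "V \<subseteq> U" unfolding is_nbhd_def by blast
    obtain z N where z: "p \<in> T z" "T (z@[N]) \<noteq> {}" "\<forall>j\<ge>N. T (z@[j]) \<subseteq> V"
      using gr[OF p V(1,2)] by blast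
    define C where "C = (\<lambda>j. z@[j]) ` {N..}"
    have C1: "C \<subseteq> sons z" unfolding C_def sons_eq by auto
    have "sons z - C \<subseteq> (\<lambda>j. z@[j]) ` {..<N}"
    proof
      fix x assume "x \<in> sons z - C"
      then obtain n where "x = z@[n]" "z@[n] \<notin> C" unfolding sons_eq by blast
      then have "\<not> N \<le> n" unfolding C_def by blast
      then show "x \<in> (\<lambda>j. z@[j]) ` {..<N}" using `x = z@[n]` by simp
    qed
    then have C2: "finite (sons z - C)" by (meson finite_imageI finite_lessThan finite_subset)
    have G: "(\<Union>x\<in>C. T x) \<in> shoot T z" unfolding shoot_def
      by (intro CollectI exI[of _ C] conjI refl C1 C2)
    have "T (z@[N]) \<subseteq> (\<Union>x\<in>C. T x)" unfolding C_def by (rule UN_upper) simp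
    then have G1: "(\<Union>x\<in>C. T x) \<noteq> {}" using z(2) by blast
    have G2: "(\<Union>x\<in>C. T x) \<subseteq> U"
    proof (rule UN_least)
      fix x assume "x \<in> C"
      then obtain j where "N \<le> j" "x = z@[j]" unfolding C_def by auto
      then show "T x \<subseteq> U" using z(3) V(3) by blast
    qed
    have "shoot T z \<ggreater> {U}" unfolding refines_def
    proof (intro ballI impI)
      fix D assume "D \<in> {U}"
      then have "D = U" by simp
      then show "\<exists>G\<in>shoot T z. G \<noteq> {} \<and> G \<subseteq> D" using G G1 G2 by (intro bexI[of _ "\<Union>x\<in>C. T x"] conjI) simp_all
    qed
    moreover have "z \<in> scope T p" unfolding scope_def using z(1) by simp
    ultimately show "\<exists>z\<in>scope T p. shoot T z \<ggreater> {U}" by (rule bexI)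
  qed
  have "baire_foliage_tree Y T" unfolding baire_foliage_tree_def using op root ls sb by (intro conjI allI)
  then have "pi_tree Y T" unfolding pi_tree_def using gi by (intro conjI)
  then show ?thesis unfolding has_pi_tree_def by blast
qed



lemma ST_homeo:
  assumes st: "ST X F" and hs: "X homeomorphic_space Y"
  shows "\<exists>G. ST Y G"
proof -
  obtain f where hm: "homeomorphic_map X Y f" using hs homeomorphic_space by blast
  have inj: "inj_on f (topspace X)" using hm by (rule homeomorphic_imp_injective_map)
  have sur: "f ` topspace X = topspace Y" using hm by (rule homeomorphic_imp_surjective_map)
  have cont: "continuous_map X Y f" using hm by (rule homeomorphic_imp_continuous_map)
  have sub: "\<And>s. F s \<subseteq> topspace X" by (rule ST_sub_top[OF st])
  define G where "G s = f ` F s" for s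
  have "ST Y G"
    unfolding ST_def
  proof (intro conjI allI impI ballI)
    fix s show "openin Y (G s)" unfolding G_def
      using homeomorphic_map_openness[OF hm sub[of s]] ST_open[OF st] by simp
  next
    show "G [] = topspace Y" unfolding G_def ST_root[OF st] by (rule sur)
  next
    fix s show "G s \<noteq> {}" unfolding G_def using ST_ne[OF st] by simp
  next
    fix s
    have "f ` F s = f ` (\<Union>k. F (s@[k]))" using ST_union[OF st, of s] by (rule arg_cong)
    then show "G s = (\<Union>k. G (s@[k]))" unfolding G_def by (simp add: image_UN)
  next
    fix s and k l :: nat assume "k \<noteq> l"
    then have "F (s@[k]) \<inter> F (s@[l]) = {}" by (rule ST_disj[OF st])
    then show "G (s@[k]) \<inter> G (s@[l]) = {}" unfolding G_def
      using inj_on_image_Int[OF inj sub sub, of "s@[k]" "s@[l]"] by simp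
  next
    fix g
    obtain p where p: "(\<Inter>n. F (map g [0..<n])) = {p}" using ST_branch[OF st] by blast
    have "f ` (\<Inter>n. F (map g [0..<n])) = (\<Inter>n. f ` F (map g [0..<n]))"
      by (rule image_INT[OF inj]) (use sub in auto)
    then have "(\<Inter>n. G (map g [0..<n])) = {f p}" unfolding G_def using p by simp
    then show "\<exists>p. (\<Inter>n. G (map g [0..<n])) = {p}" by (rule exI)
  next
    fix p V assume p: "p \<in> topspace Y" and V: "openin Y V \<and> p \<in> V"
    obtain q where q: "q \<in> topspace X" "p = f q" using p sur by blast
    define V' where "V' = {x \<in> topspace X. f x \<in> V}"
    have V'o: "openin X V'" unfolding V'_def using openin_continuous_map_preimage[OF cont] V by blast
    have qV: "q \<in> V'" unfolding V'_def using q V by simp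
    obtain D where D: "\<forall>s. D \<le> length s \<and> even (length s) \<and> q \<in> F s \<longrightarrow> (\<exists>N. \<forall>k\<ge>N. F (s@[k]) \<subseteq> V')"
      using ST_grow[OF st q(1) V'o qV] by blast
    show "\<exists>D. \<forall>s. D \<le> length s \<and> even (length s) \<and> p \<in> G s \<longrightarrow> (\<exists>N. \<forall>k\<ge>N. G (s@[k]) \<subseteq> V)"
    proof (rule exI[of _ D], intro allI impI)
      fix s assume s: "D \<le> length s \<and> even (length s) \<and> p \<in> G s"
      then obtain q' where q': "q' \<in> F s" "p = f q'" unfolding G_def by blast
      have "q' = q" using inj q q' sub[of s] unfolding inj_on_def by blast
      then obtain N where N: "\<forall>k\<ge>N. F (s@[k]) \<subseteq> V'" using D s q' by blast
      show "\<exists>N. \<forall>k\<ge>N. G (s@[k]) \<subseteq> V"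
      proof (rule exI[of _ N], intro allI impI)
        fix k assume "N \<le> k"
        then have "F (s@[k]) \<subseteq> V'" using N by blast
        then show "G (s@[k]) \<subseteq> V" unfolding G_def V'_def by blast
      qed
    qed
  qed
  then show ?thesis by blast
qed

definition Fb :: "nat list \<Rightarrow> (nat \<Rightarrow> nat) set" where
  "Fb s = {f. \<forall>i<length s. f i = s!i}"

lemma topspace_baire: "topspace baire_space = UNIV"
  unfolding baire_space_def by (simp add: topspace_product_topology PiE_UNIV_domain)

lemma Fb_PiE: "Fb s = PiE UNIV (\<lambda>i. if i < length s then {s!i} else UNIV)"
  unfolding Fb_def PiE_UNIV_domain by (auto simp: Pi_def)

lemma ST_baire: "ST baire_space Fb"
  unfolding ST_def
proof (intro conjI allI impI ballI)
  fix s
  have "finite {i. (if i < length s then {s!i} else UNIV) \<noteq> (UNIV::nat set)}"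
    by (rule finite_subset[of _ "{..<length s}"]) auto
  then show "openin baire_space (Fb s)" unfolding Fb_PiE baire_space_def
    by (subst openin_PiE_gen) simp
next
  show "Fb [] = topspace baire_space" unfolding topspace_baire Fb_def by simp
next
  fix s
  have "(\<lambda>i. if i < length s then s!i else 0) \<in> Fb s" unfolding Fb_def by simp
  then show "Fb s \<noteq> {}" by blast
next
  fix s
  show "Fb s = (\<Union>k. Fb (s@[k]))"
  proof
    show "Fb s \<subseteq> (\<Union>k. Fb (s@[k]))"
    proof
      fix f assume f: "f \<in> Fb s"
      have "f \<in> Fb (s@[f (length s)])" using f unfolding Fb_def by (auto simp: nth_append less_Suc_eq)
      then show "f \<in> (\<Union>k. Fb (s@[k]))" by blast
    qed
    show "(\<Union>k. Fb (s@[k])) \<subseteq> Fb s" unfolding Fb_def by (auto simp: nth_append)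
  qed
next
  fix s k l assume "(k::nat) \<noteq> l"
  have e: "f (length s) = m" if "f \<in> Fb (s@[m])" for f m
  proof -
    have "\<forall>i<length (s@[m]). f i = (s@[m])!i" using that unfolding Fb_def by simp
    then have "f (length s) = (s@[m])!(length s)" by simp
    then show ?thesis by simp
  qed
  show "Fb (s@[k]) \<inter> Fb (s@[l]) = {}"
  proof (rule equals0I)
    fix f assume "f \<in> Fb (s@[k]) \<inter> Fb (s@[l])"
    then have "f (length s) = k" "f (length s) = l" using e by auto
    then show False using `k \<noteq> l` by simp
  qed
next
  fix g :: "nat \<Rightarrow> nat"
  have "(\<Inter>n. Fb (map g [0..<n])) = {g}"
  proof
    show "{g} \<subseteq> (\<Inter>n. Fb (map g [0..<n]))" unfolding Fb_def by auto
    show "(\<Inter>n. Fb (map g [0..<n])) \<subseteq> {g}"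
    proof
      fix f assume "f \<in> (\<Inter>n. Fb (map g [0..<n]))"
      then have "\<forall>n. \<forall>i<n. f i = g i" unfolding Fb_def by auto
      then have "f i = g i" for i by (meson lessI)
      then have "f = g" by (rule ext)
      then show "f \<in> {g}" by simp
    qed
  qed
  then show "\<exists>p. (\<Inter>n. Fb (map g [0..<n])) = {p}" by blast
next
  fix p V assume p: "p \<in> topspace baire_space" and V: "openin baire_space V \<and> p \<in> V"
  obtain W where W: "finite {i \<in> UNIV. W i \<noteq> topspace (discrete_topology (UNIV::nat set))}"
      "p \<in> PiE UNIV W" "PiE UNIV W \<subseteq> V"
  proof -
    have "openin (product_topology (\<lambda>_. discrete_topology (UNIV::nat set)) UNIV) V" "p \<in> V"
      using V unfolding baire_space_def by auto
    from bspec[OF iffD1[OF openin_product_topology_alt this(1)] this(2)] show ?thesis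
      using that by blast
  qed
  define K where "K = {i. W i \<noteq> UNIV}"
  have K: "finite K" using W(1) unfolding K_def by simp
  obtain D where D: "K \<subseteq> {..<D}"
    using K by (auto simp: finite_nat_iff_bounded)
  show "\<exists>D. \<forall>s. D \<le> length s \<and> even (length s) \<and> p \<in> Fb s \<longrightarrow> (\<exists>N. \<forall>k\<ge>N. Fb (s@[k]) \<subseteq> V)"
  proof (rule exI[of _ D], intro allI impI)
    fix s assume s: "D \<le> length s \<and> even (length s) \<and> p \<in> Fb s"
    show "\<exists>N. \<forall>k\<ge>N. Fb (s@[k]) \<subseteq> V"
    proof (rule exI[of _ 0], intro allI impI)
      fix k :: nat
      have "Fb (s@[k]) \<subseteq> PiE UNIV W"
      proof
        fix f assume f: "f \<in> Fb (s@[k])"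
        have "f i \<in> W i" for i
        proof (cases "i \<in> K")
          case True
          then have "i < length s" using D s by auto
          then have "f i = p i" using f s unfolding Fb_def by (auto simp: nth_append)
          then show ?thesis using W(2) by (auto simp: PiE_UNIV_domain)
        next
          case False then show ?thesis unfolding K_def by simp
        qed
        then show "f \<in> PiE UNIV W" by (simp add: PiE_UNIV_domain)
      qed
      then show "Fb (s@[k]) \<subseteq> V" using W(3) by blast
    qed
  qed
qed



definition pick :: "real set \<Rightarrow> real \<Rightarrow> real \<Rightarrow> real" where
  "pick S x y = (SOME z. z \<in> S \<and> x < z \<and> z < y)"

lemma pick: assumes "countable (- S)" "x < y"
  shows "pick S x y \<in> S" "x < pick S x y" "pick S x y < y"
proof -
  have "\<exists>z. z \<in> S \<and> x < z \<and> z < y"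
  proof (rule ccontr)
    assume "\<not> ?thesis"
    then have "{x<..<y} \<subseteq> - S" by auto
    then have "countable {x<..<y}" using assms(1) countable_subset by blast
    then show False using uncountable_open_interval assms(2) by blast
  qed
  then have "pick S x y \<in> S \<and> x < pick S x y \<and> pick S x y < y"
    unfolding pick_def by (rule someI_ex)
  then show "pick S x y \<in> S" "x < pick S x y" "pick S x y < y" by auto
qed

definition up :: "real set \<Rightarrow> real \<Rightarrow> real \<Rightarrow> nat \<Rightarrow> real" where
  "up S a q k = (if k = 0 then a else pick S (q - (q-a)/2^k) (q - (q-a)/2^(Suc k)))"

lemma up_bounds: assumes "countable (- S)" "a < q" "k \<noteq> 0"
  shows "up S a q k \<in> S" "q - (q-a)/2^k < up S a q k" "up S a q k < q - (q-a)/2^(Suc k)"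
proof -
  have "(q-a)/2^(Suc k) < (q-a)/2^k" using assms(2) by (simp add: divide_strict_left_mono)
  then have lt: "q - (q-a)/2^k < q - (q-a)/2^(Suc k)" by simp
  show "up S a q k \<in> S" "q - (q-a)/2^k < up S a q k" "up S a q k < q - (q-a)/2^(Suc k)"
    unfolding up_def using assms(3) pick[OF assms(1) lt] by simp_all
qed

lemma up_0[simp]: "up S a q 0 = a" unfolding up_def by simp

lemma up_S: "countable (- S) \<Longrightarrow> a < q \<Longrightarrow> a \<in> S \<Longrightarrow> up S a q k \<in> S"
  using up_bounds(1) by (cases "k = 0") auto

lemma up_lt_q: assumes "countable (- S)" "a < q" shows "up S a q k < q"
proof (cases "k = 0")
  case True then show ?thesis using assms by simp
next
  case False
  have "0 < (q-a)/2^(Suc k)" using assms(2) by simp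
  then show ?thesis using up_bounds(3)[OF assms False] by linarith
qed

lemma up_Suc: assumes "countable (- S)" "a < q" shows "up S a q k < up S a q (Suc k)"
proof (cases "k = 0")
  case True
  have "q - (q-a)/2^1 < up S a q 1" using up_bounds(2)[OF assms, of 1] by simp
  moreover have "a \<le> q - (q-a)/2" using assms(2) by (simp add: field_simps)
  ultimately show ?thesis using True by simp
next
  case False
  have "up S a q k < q - (q-a)/2^(Suc k)" by (rule up_bounds(3)[OF assms False])
  also have "\<dots> < up S a q (Suc k)" using up_bounds(2)[OF assms, of "Suc k"] by simp
  finally show ?thesis .
qed

lemma up_mono: assumes "countable (- S)" "a < q" shows "strict_mono (up S a q)"
  by (rule strict_monoI_Suc) (rule up_Suc[OF assms])

lemma up_ge: assumes "countable (- S)" "a < q" shows "a \<le> up S a q k"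
proof -
  have "up S a q 0 \<le> up S a q k" using monoD[OF strict_mono_mono[OF up_mono[OF assms]], of 0 k] by simp
  then show ?thesis by simp
qed

lemma aux34: "(u::real) < q - t/4 \<Longrightarrow> q - t < v \<Longrightarrow> t \<le> (q-a)/2 \<Longrightarrow> a < q \<Longrightarrow> u - v \<le> 3/4*(q-a)"
  by (simp add: field_simps)

lemma up_step: assumes "countable (- S)" "a < q" shows "up S a q (Suc k) - up S a q k \<le> 3/4 * (q - a)"
proof (cases "k = 0")
  case True
  have h: "up S a q 1 < q - (q-a)/4" using up_bounds(3)[OF assms, of 1] by (simp add: eval_nat_numeral)
  have "up S a q 1 - a \<le> 3/4 * (q - a)" using h by (simp add: field_simps)
  then show ?thesis using True by simp
next
  case False
  have 1: "up S a q (Suc k) < q - ((q-a)/2^k)/4" using up_bounds(3)[OF assms, of "Suc k"] by simp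
  have 2: "q - (q-a)/2^k < up S a q k" by (rule up_bounds(2)[OF assms False])
  have "(2::real)^1 \<le> 2^k" using False by (intro power_increasing) auto
  then have "(q-a)/2^k \<le> (q-a)/2" using assms
    by (intro divide_left_mono) auto
  then show ?thesis using aux34[OF 1 2 _ assms(2)] by simp
qed

lemma small_pow: assumes "0 < (e::real)" shows "\<exists>n. \<forall>m\<ge>n. c / 2^m < e"
proof (cases "c \<le> 0")
  case True
  show ?thesis
  proof (intro exI[of _ 0] allI impI)
    fix m :: nat
    have "c / 2^m \<le> 0" using True by (simp add: divide_nonpos_pos)
    then show "c / 2^m < e" using assms by linarith
  qed
next
  case False
  obtain n where n: "(1/2::real)^n < e / c" using real_arch_pow_inv[of "e/c" "1/2"] assms False by auto
  show ?thesis
  proof (intro exI[of _ n] allI impI)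
    fix m assume "n \<le> m"
    then have "(1/2::real)^m \<le> (1/2)^n" by (intro power_decreasing) auto
    then have "(1/2::real)^m < e / c" using n by linarith
    then have "c * (1/2)^m < c * (e / c)" using False by (intro mult_strict_left_mono) auto
    then show "c / 2^m < e" using False by (simp add: power_one_over)
  qed
qed

lemma up_conv: assumes "countable (- S)" "a < q" "x < q" shows "\<exists>k. x < up S a q k"
proof -
  obtain n where n: "\<forall>m\<ge>n. (q - a) / 2^m < q - x" using small_pow[of "q - x" "q - a"] assms by auto
  have "(q-a)/2^(Suc n) < q - x" using n[rule_format, of "Suc n"] by simp
  then have "x < q - (q-a)/2^(Suc n)" by linarith
  also have "\<dots> < up S a q (Suc n)" using up_bounds(2)[OF assms(1,2), of "Suc n"] by simp
  finally show ?thesis by blast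
qed

definition dn :: "real set \<Rightarrow> real \<Rightarrow> real \<Rightarrow> nat \<Rightarrow> real" where
  "dn S b d k = - up (uminus ` S) (-b) (-d) k"

lemma countable_neg: "countable (- S) \<Longrightarrow> countable (- (uminus ` (S::real set)))"
proof -
  assume "countable (- S)"
  moreover have "- (uminus ` S) \<subseteq> uminus ` (- S)"
  proof
    fix x assume "x \<in> - uminus ` S"
    then have "-x \<notin> S" by (metis ComplD image_eqI minus_minus)
    then show "x \<in> uminus ` (-S)" by (metis ComplI image_eqI minus_minus)
  qed
  ultimately show ?thesis by (meson countable_image countable_subset)
qed

lemma dn_0[simp]: "dn S b d 0 = b" unfolding dn_def by simp

lemma dn_S: assumes "countable (- S)" "d < b" "k \<noteq> 0" shows "dn S b d k \<in> S"
proof -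
  have "up (uminus ` S) (-b) (-d) k \<in> uminus ` S"
    using up_bounds(1)[OF countable_neg[OF assms(1)] _ assms(3)] assms(2) by simp
  then show ?thesis unfolding dn_def by auto
qed

lemma dn_Suc: assumes "countable (- S)" "d < b" shows "dn S b d (Suc k) < dn S b d k"
  unfolding dn_def using up_Suc[OF countable_neg[OF assms(1)], of "-b" "-d"] assms(2) by simp

lemma dn_gt: assumes "countable (- S)" "d < b" shows "d < dn S b d k"
  unfolding dn_def using up_lt_q[OF countable_neg[OF assms(1)], of "-b" "-d" k] assms(2) by simp

lemma dn_le: assumes "countable (- S)" "d < b" shows "dn S b d k \<le> b"
  unfolding dn_def using up_ge[OF countable_neg[OF assms(1)], of "-b" "-d" k] assms(2) by simp

lemma dn_step: assumes "countable (- S)" "d < b" shows "dn S b d k - dn S b d (Suc k) \<le> 3/4 * (b - d)"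
  unfolding dn_def using up_step[OF countable_neg[OF assms(1)], of "-b" "-d" k] assms(2) by simp

lemma dn_mono: assumes "countable (- S)" "d < b" "k \<le> l" shows "dn S b d l \<le> dn S b d k"
proof -
  have "strict_mono (up (uminus ` S) (-b) (-d))" using up_mono[OF countable_neg[OF assms(1)]] assms(2) by simp
  then have "up (uminus ` S) (-b) (-d) k \<le> up (uminus ` S) (-b) (-d) l" using assms(3) by (simp add: strict_mono_less_eq)
  then show ?thesis unfolding dn_def by simp
qed

lemma dn_conv: assumes "countable (- S)" "d < b" "d < x" shows "\<exists>k. dn S b d k < x"
proof -
  obtain k where "-x < up (uminus ` S) (-b) (-d) k"
    using up_conv[OF countable_neg[OF assms(1)], of "-b" "-d" "-x"] assms by auto
  then show ?thesis unfolding dn_def by (intro exI[of _ k]) simp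
qed

lemma part_inc: fixes c :: "nat \<Rightarrow> real"
  assumes "c 0 \<le> x" "\<exists>k. x < c k" shows "\<exists>k. c k \<le> x \<and> x < c (Suc k)"
proof -
  obtain k0 where k0: "x < c k0" using assms(2) by blast
  then obtain j where j: "k0 = Suc j" using assms(1) by (cases k0) auto
  define k where "k = (LEAST k. x < c (Suc k))"
  have 1: "x < c (Suc k)" unfolding k_def by (rule LeastI[of _ j]) (use k0 j in simp)
  have 2: "c k \<le> x"
  proof (cases k)
    case 0 then show ?thesis using assms(1) by simp
  next
    case (Suc i)
    have "\<not> x < c (Suc i)" using not_less_Least[of i "\<lambda>k. x < c (Suc k)"] Suc unfolding k_def by simp
    then show ?thesis using Suc by simp
  qed
  show ?thesis using 1 2 by blast
qed

lemma part_dec: fixes e :: "nat \<Rightarrow> real"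
  assumes "x < e 0" "\<exists>k. e k \<le> x" shows "\<exists>k. e (Suc k) \<le> x \<and> x < e k"
proof -
  have "\<exists>k. (- e) 0 \<le> - x" using assms(1) by simp
  obtain k0 where k0: "e k0 \<le> x" using assms(2) by blast
  then obtain j where j: "k0 = Suc j" using assms(1) by (cases k0) auto
  define k where "k = (LEAST k. e (Suc k) \<le> x)"
  have 1: "e (Suc k) \<le> x" unfolding k_def by (rule LeastI[of _ j]) (use k0 j in simp)
  have 2: "x < e k"
  proof (cases k)
    case 0 then show ?thesis using assms(1) by simp
  next
    case (Suc i)
    have "\<not> e (Suc i) \<le> x" using not_less_Least[of i "\<lambda>k. e (Suc k) \<le> x"] Suc unfolding k_def by simp
    then show ?thesis using Suc by simp
  qed
  show ?thesis using 1 2 by blast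
qed



definition dd :: "real set \<Rightarrow> nat \<Rightarrow> real" where "dd S n = from_nat_into (- S) n"
definition wr :: "real set \<Rightarrow> int \<Rightarrow> real" where "wr S i = pick S (of_int i) (of_int i + 1/2)"

definition cutc :: "real set \<Rightarrow> real \<Rightarrow> real \<Rightarrow> nat \<Rightarrow> bool" where
  "cutc S a b m \<longleftrightarrow> odd m \<and> a < dd S (m div 2) \<and> dd S (m div 2) < b \<and> dd S (m div 2) \<notin> S"

definition child :: "real set \<Rightarrow> real \<times> real \<Rightarrow> nat \<Rightarrow> nat \<Rightarrow> real \<times> real" where
 "child S h m k =
   (if m = 0 then (wr S (int_decode k), wr S (int_decode k + 1))
    else if cutc S (fst h) (snd h) m then
     (if even k then (up S (fst h) (dd S (m div 2)) (k div 2), up S (fst h) (dd S (m div 2)) (Suc (k div 2)))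
      else (dn S (snd h) (dd S (m div 2)) (Suc (k div 2)), dn S (snd h) (dd S (m div 2)) (k div 2)))
    else (up S (fst h) (snd h) k, up S (fst h) (snd h) (Suc k)))"

lemma wr: assumes "countable (- S)"
  shows "wr S i \<in> S" "of_int i < wr S i" "wr S i < of_int i + 1/2"
  unfolding wr_def using pick[OF assms, of "of_int i" "of_int i + 1/2"] by auto

lemma wr_less: assumes "countable (- S)" "i < j" shows "wr S i < wr S j"
proof -
  have "wr S i < of_int i + 1/2" by (rule wr(3)[OF assms(1)])
  also have "\<dots> < of_int j" using assms(2) by (simp add: int_less_real_le)
  also have "\<dots> < wr S j" by (rule wr(2)[OF assms(1)])
  finally show ?thesis .
qed

lemma wr_le: assumes "countable (- S)" "i \<le> j" shows "wr S i \<le> wr S j"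
proof (cases "i = j")
  case False
  then have "i < j" using assms(2) by simp
  then show ?thesis using wr_less[OF assms(1)] by (simp add: less_imp_le)
qed simp

lemma root_props: assumes "countable (- S)"
  shows "wr S (int_decode k) \<in> S" "wr S (int_decode k) < wr S (int_decode k + 1)"
    "wr S (int_decode k + 1) - wr S (int_decode k) \<le> 2"
proof -
  show "wr S (int_decode k) \<in> S" by (rule wr(1)[OF assms])
  show "wr S (int_decode k) < wr S (int_decode k + 1)" by (rule wr_less[OF assms]) simp
  have "wr S (int_decode k + 1) < of_int (int_decode k + 1) + 1/2" by (rule wr(3)[OF assms])
  moreover have "of_int (int_decode k) < wr S (int_decode k)" by (rule wr(2)[OF assms])
  ultimately show "wr S (int_decode k + 1) - wr S (int_decode k) \<le> 2" by simp
qed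

lemma root_cover: assumes "countable (- S)"
  shows "\<exists>k. wr S (int_decode k) \<le> x \<and> x < wr S (int_decode k + 1)"
proof -
  define i where "i = floor x"
  have i1: "of_int i \<le> x" "x < of_int i + 1" unfolding i_def by linarith+
  have "\<exists>j. wr S j \<le> x \<and> x < wr S (j + 1)"
  proof (cases "wr S i \<le> x")
    case True
    have "x < of_int (i+1)" using i1 by simp
    also have "\<dots> < wr S (i+1)" by (rule wr(2)[OF assms])
    finally show ?thesis using True by blast
  next
    case False
    have "wr S (i - 1) < of_int (i - 1) + 1/2" by (rule wr(3)[OF assms])
    then have "wr S (i - 1) \<le> x" using i1 by simp
    moreover have "x < wr S (i - 1 + 1)" using False by simp
    ultimately show ?thesis by blast
  qed
  then obtain j where j: "wr S j \<le> x" "x < wr S (j + 1)" by blast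
  have "int_decode (int_encode j) = j" by simp
  then show ?thesis using j by metis
qed

lemma root_disj: assumes "countable (- S)" "k \<noteq> l"
    "wr S (int_decode k) \<le> x" "x < wr S (int_decode k + 1)"
    "wr S (int_decode l) \<le> x" "x < wr S (int_decode l + 1)"
  shows False
proof -
  have ne: "int_decode k \<noteq> int_decode l" using assms(2) inj_int_decode by (metis injD)
  show False
  proof (cases "int_decode k < int_decode l")
    case True
    then have "wr S (int_decode k + 1) \<le> wr S (int_decode l)" by (intro wr_le[OF assms(1)]) simp
    then show False using assms(4,5) by simp
  next
    case False
    then have "int_decode l < int_decode k" using ne by simp
    then have "wr S (int_decode l + 1) \<le> wr S (int_decode k)" by (intro wr_le[OF assms(1)]) simp
    then show False using assms(3,6) by simp
  qed
qed

lemma inc_disj: assumes "strict_mono (c :: nat \<Rightarrow> real)" "k \<noteq> l"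
    "c k \<le> x" "x < c (Suc k)" "c l \<le> x" "x < c (Suc l)" shows False
proof (cases "k < l")
  case True
  then have "c (Suc k) \<le> c l" using assms(1) by (simp add: strict_mono_less_eq Suc_leI)
  then show False using assms by simp
next
  case False
  then have "l < k" using assms(2) by simp
  then have "c (Suc l) \<le> c k" using assms(1) by (simp add: strict_mono_less_eq Suc_leI)
  then show False using assms by simp
qed

lemma dn_disj: assumes "countable (- S)" "d < b" "k \<noteq> l"
    "dn S b d (Suc k) \<le> x" "x < dn S b d k" "dn S b d (Suc l) \<le> x" "x < dn S b d l" shows False
proof (cases "k < l")
  case True
  then have "dn S b d l \<le> dn S b d (Suc k)" by (intro dn_mono[OF assms(1,2)]) simp
  then show False using assms by simp
next
  case False
  then have "l < k" using assms(3) by simp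
  then have "dn S b d k \<le> dn S b d (Suc l)" by (intro dn_mono[OF assms(1,2)]) simp
  then show False using assms by simp
qed

lemma child_props: assumes cS: "countable (- S)" and m: "m \<noteq> 0" and a: "a \<in> S" and ab: "a < b"
  shows "fst (child S (a,b) m k) \<in> S" "fst (child S (a,b) m k) < snd (child S (a,b) m k)"
    "a \<le> fst (child S (a,b) m k)" "snd (child S (a,b) m k) \<le> b"
    "snd (child S (a,b) m k) - fst (child S (a,b) m k) \<le> 3/4 * (b - a)"
    "even m \<Longrightarrow> snd (child S (a,b) m k) < b"
proof -
  let ?d = "dd S (m div 2)"
  let ?c = "child S (a,b) m k"
  have all: "fst ?c \<in> S \<and> fst ?c < snd ?c \<and> a \<le> fst ?c \<and> snd ?c \<le> b \<and>
     snd ?c - fst ?c \<le> 3/4 * (b - a) \<and> (even m \<longrightarrow> snd ?c < b)"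
  proof (cases "cutc S a b m")
    case True
    then have ad: "a < ?d" "?d < b" "odd m" unfolding cutc_def by auto
    show ?thesis
    proof (cases "even k")
      case True
      let ?j = "k div 2"
      have c: "?c = (up S a ?d ?j, up S a ?d (Suc ?j))" unfolding child_def using m `cutc S a b m` True by simp
      have 1: "up S a ?d ?j \<in> S" by (rule up_S[OF cS ad(1) a])
      have 2: "up S a ?d ?j < up S a ?d (Suc ?j)" by (rule up_Suc[OF cS ad(1)])
      have 3: "a \<le> up S a ?d ?j" by (rule up_ge[OF cS ad(1)])
      have 4: "up S a ?d (Suc ?j) < ?d" by (rule up_lt_q[OF cS ad(1)])
      have 5: "up S a ?d (Suc ?j) - up S a ?d ?j \<le> 3/4 * (?d - a)" by (rule up_step[OF cS ad(1)])
      have "3/4 * (?d - a) \<le> 3/4 * (b - a)" using ad by simp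
      then show ?thesis unfolding c using 1 2 3 4 5 ad ab by auto
    next
      case False
      let ?j = "k div 2"
      have c: "?c = (dn S b ?d (Suc ?j), dn S b ?d ?j)" unfolding child_def using m `cutc S a b m` False by simp
      have 1: "dn S b ?d (Suc ?j) \<in> S" by (rule dn_S[OF cS ad(2)]) simp
      have 2: "dn S b ?d (Suc ?j) < dn S b ?d ?j" by (rule dn_Suc[OF cS ad(2)])
      have 3: "?d < dn S b ?d (Suc ?j)" by (rule dn_gt[OF cS ad(2)])
      have 4: "dn S b ?d ?j \<le> b" by (rule dn_le[OF cS ad(2)])
      have 5: "dn S b ?d ?j - dn S b ?d (Suc ?j) \<le> 3/4 * (b - ?d)" by (rule dn_step[OF cS ad(2)])
      have "3/4 * (b - ?d) \<le> 3/4 * (b - a)" using ad by simp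
      then show ?thesis unfolding c using 1 2 3 4 5 ad ab by auto
    qed
  next
    case False
    have c: "?c = (up S a b k, up S a b (Suc k))" unfolding child_def using m False by simp
    have 1: "up S a b k \<in> S" by (rule up_S[OF cS ab a])
    have 2: "up S a b k < up S a b (Suc k)" by (rule up_Suc[OF cS ab])
    have 3: "a \<le> up S a b k" by (rule up_ge[OF cS ab])
    have 4: "up S a b (Suc k) < b" by (rule up_lt_q[OF cS ab])
    have 5: "up S a b (Suc k) - up S a b k \<le> 3/4 * (b - a)" by (rule up_step[OF cS ab])
    show ?thesis unfolding c using 1 2 3 4 5 by auto
  qed
  then show "fst ?c \<in> S" "fst ?c < snd ?c" "a \<le> fst ?c" "snd ?c \<le> b"
    "snd ?c - fst ?c \<le> 3/4 * (b - a)" "even m \<Longrightarrow> snd ?c < b" by auto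
qed

lemma child_excl: assumes cS: "countable (- S)" and m: "m \<noteq> 0" and a: "a \<in> S" and ab: "a < b"
    and cut: "cutc S a b m"
  shows "\<not> (fst (child S (a,b) m k) \<le> dd S (m div 2) \<and> dd S (m div 2) < snd (child S (a,b) m k))"
proof -
  let ?d = "dd S (m div 2)"
  have ad: "a < ?d" "?d < b" unfolding cutc_def using cut cutc_def by auto
  show ?thesis
  proof (cases "even k")
    case True
    have c: "child S (a,b) m k = (up S a ?d (k div 2), up S a ?d (Suc (k div 2)))"
      unfolding child_def using m cut True by simp
    show ?thesis unfolding c using up_lt_q[OF cS ad(1), of "Suc (k div 2)"] by (simp add: not_le)
  next
    case False
    have c: "child S (a,b) m k = (dn S b ?d (Suc (k div 2)), dn S b ?d (k div 2))"
      unfolding child_def using m cut False by simp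
    show ?thesis unfolding c using dn_gt[OF cS ad(2), of "Suc (k div 2)"] by (simp add: not_le)
  qed
qed

lemma child_cover: assumes cS: "countable (- S)" and m: "m \<noteq> 0" and a: "a \<in> S" and ab: "a < b"
    and x: "x \<in> S" "a \<le> x" "x < b"
  shows "\<exists>k. fst (child S (a,b) m k) \<le> x \<and> x < snd (child S (a,b) m k)"
proof (cases "cutc S a b m")
  case True
  let ?d = "dd S (m div 2)"
  have ad: "a < ?d" "?d < b" "?d \<notin> S" using True unfolding cutc_def by auto
  have "x \<noteq> ?d" using x ad by auto
  show ?thesis
  proof (cases "x < ?d")
    case True
    obtain j where j: "up S a ?d j \<le> x" "x < up S a ?d (Suc j)"
      using part_inc[of "up S a ?d" x] up_conv[OF cS ad(1) True] x by auto
    have "child S (a,b) m (2*j) = (up S a ?d j, up S a ?d (Suc j))"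
      unfolding child_def using m `cutc S a b m` by simp
    then show ?thesis using j by (intro exI[of _ "2*j"]) simp
  next
    case False
    then have xd: "?d < x" using `x \<noteq> ?d` by simp
    obtain j where j: "dn S b ?d (Suc j) \<le> x" "x < dn S b ?d j"
      using part_dec[of x "dn S b ?d"] dn_conv[OF cS ad(2) xd] x by (auto intro: less_imp_le)
    have "child S (a,b) m (2*j+1) = (dn S b ?d (Suc j), dn S b ?d j)"
      unfolding child_def using m `cutc S a b m` by simp
    then show ?thesis using j by (intro exI[of _ "2*j+1"]) simp
  qed
next
  case False
  obtain j where j: "up S a b j \<le> x" "x < up S a b (Suc j)"
    using part_inc[of "up S a b" x] up_conv[OF cS ab x(3)] x by auto
  have "child S (a,b) m j = (up S a b j, up S a b (Suc j))"
    unfolding child_def using m False by simp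
  then show ?thesis using j by (intro exI[of _ j]) simp
qed

lemma child_disj: assumes cS: "countable (- S)" and m: "m \<noteq> 0" and ab: "a < b" and kl: "k \<noteq> l"
    and xk: "fst (child S (a,b) m k) \<le> x" "x < snd (child S (a,b) m k)"
    and xl: "fst (child S (a,b) m l) \<le> x" "x < snd (child S (a,b) m l)"
  shows False
proof (cases "cutc S a b m")
  case True
  let ?d = "dd S (m div 2)"
  have ad: "a < ?d" "?d < b" using True unfolding cutc_def by auto
  have L: "child S (a,b) m i = (up S a ?d (i div 2), up S a ?d (Suc (i div 2)))" if "even i" for i
    unfolding child_def using m True that by simp
  have R: "child S (a,b) m i = (dn S b ?d (Suc (i div 2)), dn S b ?d (i div 2))" if "odd i" for i
    unfolding child_def using m True that by simp
  have Lx: "x < ?d" if "even i" "fst (child S (a,b) m i) \<le> x" "x < snd (child S (a,b) m i)" for i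
    using that L[OF that(1)] up_lt_q[OF cS ad(1), of "Suc (i div 2)"] by simp
  have Rx: "?d < x" if "odd i" "fst (child S (a,b) m i) \<le> x" "x < snd (child S (a,b) m i)" for i
    using that R[OF that(1)] dn_gt[OF cS ad(2), of "Suc (i div 2)"] by simp
  consider "even k" "even l" | "odd k" "odd l" | "even k" "odd l" | "odd k" "even l" by blast
  then show False
  proof cases
    case 1
    have "k div 2 \<noteq> l div 2" using 1 kl by (metis dvd_mult_div_cancel)
    then show False using inc_disj[OF up_mono[OF cS ad(1)]] xk xl L[OF 1(1)] L[OF 1(2)] by simp
  next
    case 2
    have "k div 2 \<noteq> l div 2" using 2 kl by (metis odd_two_times_div_two_succ)
    then show False using dn_disj[OF cS ad(2)] xk xl R[OF 2(1)] R[OF 2(2)] by simp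
  next
    case 3 then show False using Lx[OF 3(1) xk] Rx[OF 3(2) xl] by simp
  next
    case 4 then show False using Rx[OF 4(1) xk] Lx[OF 4(2) xl] by simp
  qed
next
  case False
  have c: "child S (a,b) m i = (up S a b i, up S a b (Suc i))" for i
    unfolding child_def using m False by simp
  show False using inc_disj[OF up_mono[OF cS ab] kl] xk xl unfolding c by simp
qed



fun hullr :: "real set \<Rightarrow> nat list \<Rightarrow> real \<times> real" where
  "hullr S [] = (0,0)"
| "hullr S (k#rs) = child S (hullr S rs) (length rs) k"

definition hl :: "real set \<Rightarrow> nat list \<Rightarrow> real \<times> real" where "hl S s = hullr S (rev s)"

lemma hull_snoc[simp]: "hl S (s@[k]) = child S (hl S s) (length s) k"
  unfolding hl_def by simp

lemma hull_single: "hl S [k] = (wr S (int_decode k), wr S (int_decode k + 1))"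
  using hull_snoc[of S "[]" k] unfolding child_def by simp

lemma hull_inv: assumes cS: "countable (- S)" and "s \<noteq> []"
  shows "fst (hl S s) \<in> S \<and> fst (hl S s) < snd (hl S s) \<and>
         snd (hl S s) - fst (hl S s) \<le> 2 * (3/4)^(length s - 1)"
  using assms(2)
proof (induction s rule: rev_induct)
  case Nil then show ?case by simp
next
  case (snoc k s)
  show ?case
  proof (cases "s = []")
    case True
    then show ?thesis using root_props[OF cS, of k] unfolding True by (simp add: hull_single)
  next
    case False
    obtain a b where h: "hl S s = (a,b)" by (cases "hl S s")
    have ih: "a \<in> S" "a < b" "b - a \<le> 2 * (3/4)^(length s - 1)" using snoc.IH[OF False] h by auto
    have m: "length s \<noteq> 0" using False by simp
    note cp = child_props[OF cS m ih(1,2), of k]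
    have "3/4*(b-a) \<le> 3/4*(2*(3/4::real)^(length s - 1))" using ih(3) by (intro mult_left_mono) auto
    then have "snd (child S (a,b) (length s) k) - fst (child S (a,b) (length s) k) \<le> 3/4 * (2 * (3/4)^(length s - 1))"
      using cp(5) by (rule order_trans[rotated])
    also have "\<dots> = 2 * (3/4)^(length s)" using m by (cases "length s") simp_all
    finally show ?thesis using cp(1,2) h by simp
  qed
qed

definition GS :: "real set \<Rightarrow> nat list \<Rightarrow> real set" where
  "GS S s = (if s = [] then S else {x \<in> S. fst (hl S s) \<le> x \<and> x < snd (hl S s)})"

lemma sorg_top: "topspace sorgenfrey = UNIV"
  unfolding sorgenfrey_def topology_generated_by_topspace
proof (rule set_eqI, rule iffI)
  fix x :: real
  have "x \<in> {x..<x+1}" by simp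
  then show "x \<in> \<Union> {{a..<b} |a b. True}" by blast
qed simp

lemma sorg_open: "openin sorgenfrey {a..<b}"
  unfolding sorgenfrey_def by (rule topology_generated_by_Basis) blast

lemma sorg_nbhd: assumes "openin sorgenfrey U" "x \<in> U" shows "\<exists>e>0. {x..<x+e} \<subseteq> U"
proof -
  have "generate_topology_on {{a..<b} |a b. True} U"
    using assms(1) unfolding sorgenfrey_def by (rule openin_topology_generated_by)
  then have "\<forall>x\<in>U. \<exists>e>0. {x..<x+e} \<subseteq> U"
  proof (induction rule: generate_topology_on.induct)
    case Empty then show ?case by simp
  next
    case (Int a b)
    show ?case
    proof
      fix x assume "x \<in> a \<inter> b"
      then obtain e1 e2 where "e1 > 0" "{x..<x+e1} \<subseteq> a" "e2 > 0" "{x..<x+e2} \<subseteq> b"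
        using Int by blast
      moreover have "{x..<x+min e1 e2} \<subseteq> {x..<x+e1}" "{x..<x+min e1 e2} \<subseteq> {x..<x+e2}" by auto
      ultimately have "{x..<x+min e1 e2} \<subseteq> a \<inter> b" by blast
      moreover have "min e1 e2 > 0" using `e1 > 0` `e2 > 0` by simp
      ultimately show "\<exists>e>0. {x..<x+e} \<subseteq> a \<inter> b" by blast
    qed
  next
    case (UN K)
    show ?case
    proof
      fix x assume "x \<in> \<Union>K"
      then obtain k where k: "k \<in> K" "x \<in> k" by blast
      then obtain e where "e > 0" "{x..<x+e} \<subseteq> k" using UN by blast
      then show "\<exists>e>0. {x..<x+e} \<subseteq> \<Union>K" using k by blast
    qed
  next
    case (Basis s)
    then obtain a b where s: "s = {a..<b}" by blast
    show ?case
    proof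
      fix x assume "x \<in> s"
      then have "a \<le> x" "x < b" using s by auto
      then show "\<exists>e>0. {x..<x+e} \<subseteq> s" unfolding s by (intro exI[of _ "b - x"]) auto
    qed
  qed
  then show ?thesis using assms(2) by blast
qed

lemma GS_nonroot: "s \<noteq> [] \<Longrightarrow> GS S s = {x \<in> S. fst (hl S s) \<le> x \<and> x < snd (hl S s)}"
  unfolding GS_def by simp

lemma GS_snoc: "GS S (s@[k]) = {x \<in> S. fst (hl S (s@[k])) \<le> x \<and> x < snd (hl S (s@[k]))}"
  unfolding GS_def by simp

lemma ST_sorg: assumes cS: "countable (- S)" shows "ST (subtopology sorgenfrey S) (GS S)"
proof -
  have top: "topspace (subtopology sorgenfrey S) = S" by (simp add: sorg_top)
  have Sne: "S \<noteq> {}"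
  proof
    assume "S = {}"
    then have "countable (UNIV::real set)" using cS by simp
    then show False using uncountable_UNIV_real by blast
  qed
  show ?thesis
    unfolding ST_def
  proof (intro conjI allI impI ballI)
    fix s
    show "openin (subtopology sorgenfrey S) (GS S s)"
    proof (cases "s = []")
      case True then show ?thesis unfolding GS_def using openin_topspace[of "subtopology sorgenfrey S"] top by simp
    next
      case False
      have "GS S s = {fst (hl S s)..<snd (hl S s)} \<inter> S" unfolding GS_nonroot[OF False] by auto
      then show ?thesis unfolding openin_subtopology using sorg_open by blast
    qed
  next
    show "GS S [] = topspace (subtopology sorgenfrey S)" unfolding GS_def top by simp
  next
    fix s
    show "GS S s \<noteq> {}"
    proof (cases "s = []")
      case True then show ?thesis unfolding GS_def using Sne by simp
    next
      case False
      then have "fst (hl S s) \<in> GS S s" unfolding GS_nonroot[OF False] using hull_inv[OF cS False] by simp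
      then show ?thesis by blast
    qed
  next
    fix s
    show "GS S s = (\<Union>k. GS S (s@[k]))"
    proof
      show "(\<Union>k. GS S (s@[k])) \<subseteq> GS S s"
      proof (rule UN_least)
        fix k
        show "GS S (s@[k]) \<subseteq> GS S s"
        proof (cases "s = []")
          case True then show ?thesis unfolding GS_def by auto
        next
          case False
          obtain a b where h: "hl S s = (a,b)" by (cases "hl S s")
          have ih: "a \<in> S" "a < b" using hull_inv[OF cS False] h by auto
          have m: "length s \<noteq> 0" using False by simp
          note cp = child_props[OF cS m ih(1,2), of k]
          show ?thesis unfolding GS_nonroot[OF False] GS_snoc using cp h by auto
        qed
      qed
      show "GS S s \<subseteq> (\<Union>k. GS S (s@[k]))"
      proof
        fix x assume x: "x \<in> GS S s"
        show "x \<in> (\<Union>k. GS S (s@[k]))"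
        proof (cases "s = []")
          case True
          obtain k where "wr S (int_decode k) \<le> x \<and> x < wr S (int_decode k + 1)" using root_cover[OF cS] by blast
          then have "x \<in> GS S [k]" using x True unfolding GS_def by (simp add: hull_single)
          then show ?thesis using True by auto
        next
          case False
          obtain a b where h: "hl S s = (a,b)" by (cases "hl S s")
          have ih: "a \<in> S" "a < b" using hull_inv[OF cS False] h by auto
          have m: "length s \<noteq> 0" using False by simp
          have xx: "x \<in> S" "a \<le> x" "x < b" using x h unfolding GS_nonroot[OF False] by auto
          obtain k where "fst (child S (a,b) (length s) k) \<le> x \<and> x < snd (child S (a,b) (length s) k)"
            using child_cover[OF cS m ih xx] by blast
          then have "x \<in> GS S (s@[k])" unfolding GS_snoc using xx h by simp
          then show ?thesis by blast
        qed
      qed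
    qed
  next
    fix s and k l :: nat assume kl: "k \<noteq> l"
    show "GS S (s@[k]) \<inter> GS S (s@[l]) = {}"
    proof (rule equals0I)
      fix x assume x: "x \<in> GS S (s@[k]) \<inter> GS S (s@[l])"
      show False
      proof (cases "s = []")
        case True
        then have "x \<in> S \<and> wr S (int_decode k) \<le> x \<and> x < wr S (int_decode k + 1) \<and>
            x \<in> S \<and> wr S (int_decode l) \<le> x \<and> x < wr S (int_decode l + 1)"
          using x unfolding GS_def by (simp add: hull_single)
        then show False using root_disj[OF cS kl, of x] by blast
      next
        case False
        obtain a b where h: "hl S s = (a,b)" by (cases "hl S s")
        have ih: "a \<in> S" "a < b" using hull_inv[OF cS False] h by auto
        have m: "length s \<noteq> 0" using False by simp
        show False using x child_disj[OF cS m ih(2) kl, of x] h unfolding GS_def by simp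
      qed
    qed
  next
    fix g :: "nat \<Rightarrow> nat"
    define A where "A n = fst (hl S (map g [0..<Suc n]))" for n
    define B where "B n = snd (hl S (map g [0..<Suc n]))" for n
    have mapS: "map g [0..<Suc (Suc n)] = map g [0..<Suc n] @ [g (Suc n)]" for n by simp
    have inv: "A n \<in> S" "A n < B n" "B n - A n \<le> 2 * (3/4)^n" for n
      using hull_inv[OF cS, of "map g [0..<Suc n]"] unfolding A_def B_def by auto
    have ch: "hl S (map g [0..<Suc (Suc n)]) = child S (A n, B n) (Suc n) (g (Suc n))" for n
      unfolding mapS hull_snoc A_def B_def by simp
    have steps: "A n \<le> A (Suc n)" "B (Suc n) \<le> B n" "even (Suc n) \<Longrightarrow> B (Suc n) < B n" for n
      using child_props[OF cS _ inv(1,2), of "Suc n" n "g (Suc n)"] ch[of n]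
      unfolding A_def[of "Suc n"] B_def[of "Suc n"] by auto
    have lim0: "(\<lambda>n. A n - B n) \<longlonglongrightarrow> 0"
    proof (rule Lim_null_comparison)
      show "\<forall>\<^sub>F n in sequentially. norm (A n - B n) \<le> 2 * (3/4)^n"
        using inv(2,3) by (intro always_eventually allI) (simp add: abs_if)
      show "(\<lambda>n. 2 * (3/4::real)^n) \<longlonglongrightarrow> 0"
        by (rule tendsto_mult_right_zero) (rule LIMSEQ_realpow_zero, simp_all)
    qed
    obtain L where L: "\<forall>n. A n \<le> L" "\<forall>n. L \<le> B n"
      using nested_sequence_unique[of A B] steps(1,2) inv(2) lim0 by (auto simp: less_imp_le)
    have LB: "L < B n" for n
    proof (cases "even (Suc n)")
      case True then show ?thesis using steps(3)[of n] L(2) by (meson le_less_trans)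
    next
      case False
      then have "even (Suc (Suc n))" by simp
      then have "B (Suc (Suc n)) < B (Suc n)" by (rule steps(3))
      then show ?thesis using steps(2)[of n] L(2) by (meson le_less_trans less_le_trans)
    qed
    have LS: "L \<in> S"
    proof (rule ccontr)
      assume nL: "L \<notin> S"
      then have "- S \<noteq> {}" by auto
      then have "range (from_nat_into (- S)) = - S" by (rule range_from_nat_into[OF _ cS])
      then have "L \<in> range (from_nat_into (- S))" using nL by simp
      then obtain m where m: "dd S m = L" unfolding dd_def by blast
      have d: "Suc (2*m) div 2 = m" by simp
      have "A (2*m) \<noteq> L" using inv(1)[of "2*m"] nL by auto
      then have cut: "cutc S (A (2*m)) (B (2*m)) (Suc (2*m))"
        unfolding cutc_def d m using L LB nL by (simp add: order_le_neq_trans)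
      have "\<not> (A (Suc (2*m)) \<le> L \<and> L < B (Suc (2*m)))"
        using child_excl[OF cS _ inv(1,2) cut, of "g (Suc (2*m))"] ch[of "2*m"] d m
        unfolding A_def[of "Suc (2*m)"] B_def[of "Suc (2*m)"] by simp
      then show False using L LB by blast
    qed
    have GSn: "GS S (map g [0..<Suc n]) = {x \<in> S. A n \<le> x \<and> x < B n}" for n
      unfolding A_def B_def by (rule GS_nonroot) simp
    have "(\<Inter>n. GS S (map g [0..<n])) = {L}"
    proof
      show "{L} \<subseteq> (\<Inter>n. GS S (map g [0..<n]))"
      proof (clarsimp)
        fix n show "L \<in> GS S (map g [0..<n])"
        proof (cases n)
          case 0 then show ?thesis using LS unfolding GS_def by simp
        next
          case (Suc n') then show ?thesis using GSn[of n'] LS L LB by simp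
        qed
      qed
      show "(\<Inter>n. GS S (map g [0..<n])) \<subseteq> {L}"
      proof
        fix x assume "x \<in> (\<Inter>n. GS S (map g [0..<n]))"
        then have "x \<in> GS S (map g [0..<Suc n])" for n by blast
        then have xn: "A n \<le> x \<and> x < B n" for n using GSn by blast
        have "x = L"
        proof (rule ccontr)
          assume "x \<noteq> L"
          then have e: "0 < \<bar>x - L\<bar> / 2" by simp
          obtain n where n: "(3/4::real)^n < \<bar>x - L\<bar> / 2" using real_arch_pow_inv[OF e, of "3/4"] by auto
          have "A n \<le> L" "L \<le> B n" using L by auto
          then have "\<bar>x - L\<bar> \<le> B n - A n" using xn[of n] by (auto simp: abs_if)
          moreover have "2 * (3/4::real)^n < \<bar>x - L\<bar>" using n by (simp add: field_simps)
          ultimately show False using inv(3)[of n] by linarith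
        qed
        then show "x \<in> {L}" by simp
      qed
    qed
    then show "\<exists>p. (\<Inter>n. GS S (map g [0..<n])) = {p}" by blast
  next
    fix p V assume p: "p \<in> topspace (subtopology sorgenfrey S)" and V: "openin (subtopology sorgenfrey S) V \<and> p \<in> V"
    obtain T where T: "openin sorgenfrey T" "V = T \<inter> S" using V unfolding openin_subtopology by blast
    have pS: "p \<in> S" using p top by simp
    obtain e where e: "e > 0" "{p..<p+e} \<subseteq> T" using sorg_nbhd[OF T(1)] V T(2) by blast
    have e2: "0 < e / 2" using e by simp
    obtain n0 where n0: "(3/4::real)^n0 < e / 2" using real_arch_pow_inv[OF e2, of "3/4"] by auto
    show "\<exists>D. \<forall>s. D \<le> length s \<and> even (length s) \<and> p \<in> GS S s \<longrightarrow> (\<exists>N. \<forall>k\<ge>N. GS S (s@[k]) \<subseteq> V)"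
    proof (rule exI[of _ "Suc n0"], intro allI impI)
      fix s assume s: "Suc n0 \<le> length s \<and> even (length s) \<and> p \<in> GS S s"
      then have sne: "s \<noteq> []" by auto
      obtain a b where h: "hl S s = (a,b)" by (cases "hl S s")
      have ih: "a \<in> S" "a < b" "b - a \<le> 2 * (3/4)^(length s - 1)" using hull_inv[OF cS sne] h by auto
      have m: "length s \<noteq> 0" using sne by simp
      have "(3/4::real)^(length s - 1) \<le> (3/4)^n0" using s by (intro power_decreasing) auto
      moreover have "2 * (3/4::real)^n0 < e" using n0 by (simp add: field_simps)
      ultimately have ba: "b - a < e" using ih(3) by linarith
      have pab: "a \<le> p" "p < b" using s h unfolding GS_nonroot[OF sne] by auto
      have nc: "\<not> cutc S a b (length s)" using s unfolding cutc_def by simp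
      have c: "child S (a,b) (length s) k = (up S a b k, up S a b (Suc k))" for k
        unfolding child_def using m nc by simp
      obtain N where N: "p < up S a b N" using up_conv[OF cS ih(2) pab(2)] by blast
      show "\<exists>N. \<forall>k\<ge>N. GS S (s@[k]) \<subseteq> V"
      proof (rule exI[of _ N], intro allI impI)
        fix k assume "N \<le> k"
        then have "up S a b N \<le> up S a b k" using up_mono[OF cS ih(2)] by (simp add: strict_mono_less_eq)
        then have pk: "p < up S a b k" using N by simp
        have ub: "up S a b (Suc k) < b" by (rule up_lt_q[OF cS ih(2)])
        have "GS S (s@[k]) = {x \<in> S. up S a b k \<le> x \<and> x < up S a b (Suc k)}"
          using GS_snoc[of S s k] h c by simp
        also have "\<dots> \<subseteq> {p..<p+e} \<inter> S" using pk ub ba pab by auto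
        also have "\<dots> \<subseteq> V" using e(2) T(2) by blast
        finally show "GS S (s@[k]) \<subseteq> V" .
      qed
    qed
  qed
qed



locale prodtree =
  fixes A :: "'a set" and X :: "'a \<Rightarrow> 'b topology" and F :: "'a \<Rightarrow> nat list \<Rightarrow> 'b set"
    and e :: "nat \<Rightarrow> 'a"
  assumes st: "\<And>\<alpha>. \<alpha> \<in> A \<Longrightarrow> ST (X \<alpha>) (F \<alpha>)"
    and e: "range e = A"
begin

definition act :: "nat \<Rightarrow> 'a set" where "act n = e ` {..n}"
definition TT :: "nat \<Rightarrow> ('a \<Rightarrow> nat \<times> nat) set" where "TT n = PiE (act n) (\<lambda>_. UNIV)"
definition mn :: "nat \<Rightarrow> ('a \<Rightarrow> nat \<times> nat) \<Rightarrow> nat" where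
  "mn n t = Min ((\<lambda>\<alpha>. min (fst (t \<alpha>)) (snd (t \<alpha>))) ` act n)"
definition grp :: "nat \<Rightarrow> nat \<Rightarrow> ('a \<Rightarrow> nat \<times> nat) set" where "grp n j = {t \<in> TT n. mn n t = j}"
definition enm :: "nat \<Rightarrow> nat \<Rightarrow> nat \<Rightarrow> ('a \<Rightarrow> nat \<times> nat)" where "enm n j = from_nat_into (grp n j)"
definition ext :: "nat \<Rightarrow> ('a \<Rightarrow> nat list) \<Rightarrow> ('a \<Rightarrow> nat \<times> nat) \<Rightarrow> ('a \<Rightarrow> nat list)" where
  "ext n \<sigma> t = (\<lambda>\<alpha>. if \<alpha> \<in> act n then \<sigma> \<alpha> @ [fst (t \<alpha>), snd (t \<alpha>)] else \<sigma> \<alpha>)"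

fun go :: "nat \<Rightarrow> ('a \<Rightarrow> nat list) \<Rightarrow> nat list \<Rightarrow> ('a \<Rightarrow> nat list)" where
  "go n \<sigma> [] = \<sigma>"
| "go n \<sigma> [j] = \<sigma>"
| "go n \<sigma> (j#r#rest) = go (Suc n) (ext n \<sigma> (enm n j r)) rest"

definition st :: "nat list \<Rightarrow> ('a \<Rightarrow> nat list)" where "st v = go 0 (\<lambda>_. []) v"

definition cell :: "('a \<Rightarrow> nat list) \<Rightarrow> ('a \<Rightarrow> 'b) set" where "cell \<sigma> = PiE A (\<lambda>\<alpha>. F \<alpha> (\<sigma> \<alpha>))"

definition PT :: "nat list \<Rightarrow> ('a \<Rightarrow> 'b) set" where
  "PT v = (if even (length v) then cell (st v)
           else (\<Union>t\<in>grp (length v div 2) (last v). cell (ext (length v div 2) (st v) t)))"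

lemma go_snoc2: "even (length v) \<Longrightarrow>
   go n \<sigma> (v @ [j, r]) = ext (n + length v div 2) (go n \<sigma> v) (enm (n + length v div 2) j r)"
proof (induction n \<sigma> v rule: go.induct)
  case (1 n \<sigma>) then show ?case by simp
next
  case (2 n \<sigma> j) then show ?case by simp
next
  case (3 n \<sigma> j' r' rest)
  have "even (length rest)" using 3(2) by simp
  then show ?case using 3(1) by simp
qed

lemma go_snoc1: "even (length v) \<Longrightarrow> go n \<sigma> (v @ [j]) = go n \<sigma> v"
proof (induction n \<sigma> v rule: go.induct)
  case (3 n \<sigma> j' r' rest)
  have "even (length rest)" using 3(2) by simp
  then show ?case using 3(1) by simp
qed simp_all

lemma st_snoc2: "even (length v) \<Longrightarrow> st (v @ [j, r]) = ext (length v div 2) (st v) (enm (length v div 2) j r)"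
  unfolding st_def using go_snoc2[of v 0] by simp

lemma st_snoc1: "even (length v) \<Longrightarrow> st (v @ [j]) = st v"
  unfolding st_def by (rule go_snoc1)

lemma go_unchanged: "\<alpha> \<notin> e ` {..< n + length v div 2} \<Longrightarrow> go n \<sigma> v \<alpha> = \<sigma> \<alpha>"
proof (induction n \<sigma> v rule: go.induct)
  case (3 n \<sigma> j r rest)
  have a: "\<alpha> \<notin> e ` {..< Suc n + length rest div 2}" using 3(2) by simp
  have na: "\<alpha> \<notin> act n" using 3(2) unfolding act_def by auto
  have "go (Suc n) (ext n \<sigma> (enm n j r)) rest \<alpha> = ext n \<sigma> (enm n j r) \<alpha>" using 3(1)[OF a] .
  also have "\<dots> = \<sigma> \<alpha>" using na unfolding ext_def by simp
  finally show ?case by simp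
qed simp_all

lemma act_sub: "act n \<subseteq> A" unfolding act_def using e by auto
lemma act_fin: "finite (act n)" unfolding act_def by simp
lemma act_ne: "e 0 \<in> act n" unfolding act_def by simp
lemma act_mono: "m \<le> n \<Longrightarrow> e m \<in> act n" unfolding act_def by simp

lemma TT_countable: "countable (TT n)" unfolding TT_def
  by (rule countable_PiE[OF act_fin]) simp

lemma grp_infinite: "infinite (grp n j)"
proof -
  define f where "f r = (\<lambda>\<alpha>. if \<alpha> \<in> act n then (if \<alpha> = e 0 then (j, j + r) else (j, j)) else undefined)" for r
  have img: "(\<lambda>\<alpha>. min (fst (f r \<alpha>)) (snd (f r \<alpha>))) ` act n = {j}" for r
  proof -
    have "\<forall>\<alpha>\<in>act n. min (fst (f r \<alpha>)) (snd (f r \<alpha>)) = j" unfolding f_def by auto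
    then have "(\<lambda>\<alpha>. min (fst (f r \<alpha>)) (snd (f r \<alpha>))) ` act n = (\<lambda>_. j) ` act n" by (intro image_cong) auto
    also have "\<dots> = {j}" using act_ne by auto
    finally show ?thesis .
  qed
  have inr: "f r \<in> grp n j" for r
  proof -
    have "mn n (f r) = j" unfolding mn_def img by simp
    moreover have "f r \<in> TT n" unfolding TT_def by (auto simp: f_def)
    ultimately show ?thesis unfolding grp_def by simp
  qed
  have "inj f"
  proof (rule injI)
    fix r s assume "f r = f s"
    then have "f r (e 0) = f s (e 0)" by simp
    then show "r = s" using act_ne unfolding f_def by simp
  qed
  then have "infinite (range f)" by (simp add: range_inj_infinite)
  moreover have "range f \<subseteq> grp n j" using inr by auto
  ultimately show ?thesis using infinite_super by blast
qed

lemma enm_bij: "bij_betw (enm n j) UNIV (grp n j)"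
  unfolding enm_def
  by (rule bij_betw_from_nat_into)
     (use TT_countable grp_infinite in \<open>auto intro: countable_subset[of _ "TT n"] simp: grp_def\<close>)

lemma grp_mn: "t \<in> grp n j \<Longrightarrow> \<alpha> \<in> act n \<Longrightarrow> j \<le> fst (t \<alpha>) \<and> j \<le> snd (t \<alpha>)"
proof -
  assume t: "t \<in> grp n j" and a: "\<alpha> \<in> act n"
  have "mn n t \<le> min (fst (t \<alpha>)) (snd (t \<alpha>))" unfolding mn_def using a act_fin by (intro Min_le) auto
  then show ?thesis using t unfolding grp_def by auto
qed

lemma even_list_induct[consumes 1, case_names Nil snoc]:
  fixes v :: "nat list"
  assumes "even (length v)" "P []" "\<And>v j r. even (length v) \<Longrightarrow> P v \<Longrightarrow> P (v@[j,r])"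
  shows "P v"
proof -
  have "\<forall>v::nat list. length v = 2*n \<longrightarrow> P v" for n
  proof (induction n)
    case 0 then show ?case using assms(2) by simp
  next
    case (Suc n)
    show ?case
    proof (intro allI impI)
      fix v :: "nat list" assume l: "length v = 2 * Suc n"
      define w where "w = take (2*n) v"
      have v: "v = w @ [v!(2*n), v!(2*n+1)]"
        unfolding w_def using l by (intro nth_equalityI) (auto simp: nth_append min_def less_Suc_eq)
      have lw: "length w = 2*n" unfolding w_def using l by simp
      then have "P w" using Suc by blast
      then have "P (w @ [v!(2*n), v!(2*n+1)])" using assms(3) lw by simp
      then show "P v" using v by simp
    qed
  qed
  then show ?thesis using assms(1) by (metis evenE)
qed

lemma st_fin: "finite {\<alpha>. st v \<alpha> \<noteq> []}"
proof -
  have "{\<alpha>. st v \<alpha> \<noteq> []} \<subseteq> e ` {..< length v div 2}"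
    using go_unchanged[of _ 0 v "\<lambda>_. []"] unfolding st_def by auto
  then show ?thesis by (rule finite_subset) simp
qed

lemma st_len: "even (length v) \<Longrightarrow> e m = \<alpha> \<Longrightarrow>
    2 * (length v div 2 - m) \<le> length (st v \<alpha>) \<and> even (length (st v \<alpha>))"
proof (induction v rule: even_list_induct)
  case Nil then show ?case by (simp add: st_def)
next
  case (snoc v j r)
  let ?N = "length v div 2"
  have s: "st (v@[j,r]) \<alpha> = (if \<alpha> \<in> act ?N then st v \<alpha> @ [fst (enm ?N j r \<alpha>), snd (enm ?N j r \<alpha>)] else st v \<alpha>)"
    using st_snoc2[OF snoc.hyps] unfolding ext_def by simp
  have l: "length (v@[j,r]) div 2 = Suc ?N" using snoc.hyps by simp
  show ?case
  proof (cases "m \<le> ?N")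
    case True
    then have "\<alpha> \<in> act ?N" using act_mono snoc.prems by blast
    then show ?thesis using s l snoc.IH snoc.prems True by (simp add: Suc_diff_le)
  next
    case False
    then have "Suc ?N - m = 0" by simp
    then show ?thesis using s l snoc.IH snoc.prems by simp
  qed
qed

lemma F_nest: "\<alpha> \<in> A \<Longrightarrow> F \<alpha> (s@t) \<subseteq> F \<alpha> s"
  by (rule ST_nested[OF st])

lemma cell_split: "cell \<sigma> = (\<Union>t\<in>TT n. cell (ext n \<sigma> t))"
proof
  show "(\<Union>t\<in>TT n. cell (ext n \<sigma> t)) \<subseteq> cell \<sigma>"
  proof (rule UN_least, rule subsetI)
    fix t x assume "x \<in> cell (ext n \<sigma> t)"
    then have x: "x \<in> PiE A (\<lambda>\<alpha>. F \<alpha> (ext n \<sigma> t \<alpha>))" unfolding cell_def .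
    have "x \<alpha> \<in> F \<alpha> (\<sigma> \<alpha>)" if a: "\<alpha> \<in> A" for \<alpha>
    proof -
      have "x \<alpha> \<in> F \<alpha> (ext n \<sigma> t \<alpha>)" using x a by (auto simp: PiE_iff)
      moreover have "F \<alpha> (ext n \<sigma> t \<alpha>) \<subseteq> F \<alpha> (\<sigma> \<alpha>)" unfolding ext_def using F_nest[OF a] by simp
      ultimately show ?thesis by blast
    qed
    then show "x \<in> cell \<sigma>" using x unfolding cell_def by (auto simp: PiE_iff)
  qed
  show "cell \<sigma> \<subseteq> (\<Union>t\<in>TT n. cell (ext n \<sigma> t))"
  proof
    fix x assume x: "x \<in> cell \<sigma>"
    have ex: "\<exists>p. x \<alpha> \<in> F \<alpha> (\<sigma> \<alpha> @ [fst p, snd p])" if a: "\<alpha> \<in> A" for \<alpha>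
    proof -
      have "x \<alpha> \<in> F \<alpha> (\<sigma> \<alpha>)" using x a unfolding cell_def by (auto simp: PiE_iff)
      then obtain k l where "x \<alpha> \<in> F \<alpha> (\<sigma> \<alpha> @ [k, l])" using ST_cover2[OF st[OF a]] by blast
      then show ?thesis by (intro exI[of _ "(k,l)"]) simp
    qed
    define t where "t \<alpha> = (if \<alpha> \<in> act n then (SOME p. x \<alpha> \<in> F \<alpha> (\<sigma> \<alpha> @ [fst p, snd p])) else undefined)" for \<alpha>
    have tT: "t \<in> TT n" unfolding TT_def t_def by auto
    have "x \<in> cell (ext n \<sigma> t)"
      unfolding cell_def
    proof (rule PiE_I)
      fix \<alpha> assume a: "\<alpha> \<in> A"
      show "x \<alpha> \<in> F \<alpha> (ext n \<sigma> t \<alpha>)"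
      proof (cases "\<alpha> \<in> act n")
        case True
        then show ?thesis unfolding ext_def t_def using someI_ex[OF ex[OF a]] by simp
      next
        case False
        then show ?thesis unfolding ext_def using x a unfolding cell_def by (auto simp: PiE_iff)
      qed
    next
      fix \<alpha> assume "\<alpha> \<notin> A" then show "x \<alpha> = undefined" using x unfolding cell_def by (auto simp: PiE_iff extensional_def)
    qed
    then show "x \<in> (\<Union>t\<in>TT n. cell (ext n \<sigma> t))" using tT by blast
  qed
qed

lemma cell_disj: assumes "t \<in> TT n" "t' \<in> TT n" "t \<noteq> t'"
  shows "cell (ext n \<sigma> t) \<inter> cell (ext n \<sigma> t') = {}"
proof -
  obtain \<alpha> where a: "\<alpha> \<in> act n" "t \<alpha> \<noteq> t' \<alpha>"
    using assms unfolding TT_def by (metis PiE_ext UNIV_I)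
  have aA: "\<alpha> \<in> A" using a act_sub by blast
  have "(fst (t \<alpha>), snd (t \<alpha>)) \<noteq> (fst (t' \<alpha>), snd (t' \<alpha>))" using a(2) by (simp add: prod_eq_iff)
  then have d: "F \<alpha> (\<sigma> \<alpha> @ [fst (t \<alpha>), snd (t \<alpha>)]) \<inter> F \<alpha> (\<sigma> \<alpha> @ [fst (t' \<alpha>), snd (t' \<alpha>)]) = {}"
    by (rule ST_disj2[OF st[OF aA]])
  show ?thesis
  proof (rule equals0I)
    fix x assume "x \<in> cell (ext n \<sigma> t) \<inter> cell (ext n \<sigma> t')"
    then have "x \<alpha> \<in> F \<alpha> (ext n \<sigma> t \<alpha>)" "x \<alpha> \<in> F \<alpha> (ext n \<sigma> t' \<alpha>)"
      using aA unfolding cell_def by (auto simp: PiE_iff)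
    then show False using d a(1) unfolding ext_def by auto
  qed
qed

lemma cell_ne: "cell \<sigma> \<noteq> {}"
  unfolding cell_def PiE_eq_empty_iff using ST_ne[OF st] by blast

lemma cell_open: assumes "finite {\<alpha>. \<sigma> \<alpha> \<noteq> []}" shows "openin (product_topology X A) (cell \<sigma>)"
  unfolding cell_def openin_PiE_gen
proof (intro disjI2 conjI ballI)
  have "{\<alpha> \<in> A. F \<alpha> (\<sigma> \<alpha>) \<noteq> topspace (X \<alpha>)} \<subseteq> {\<alpha>. \<sigma> \<alpha> \<noteq> []}"
    using ST_root[OF st] by auto
  then show "finite {\<alpha> \<in> A. F \<alpha> (\<sigma> \<alpha>) \<noteq> topspace (X \<alpha>)}" using assms by (rule finite_subset)
  fix \<alpha> assume "\<alpha> \<in> A" then show "openin (X \<alpha>) (F \<alpha> (\<sigma> \<alpha>))" by (rule ST_open[OF st])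
qed

lemma PT_even: "even (length v) \<Longrightarrow> PT v = cell (st v)" unfolding PT_def by simp

lemma PT_odd: "even (length v) \<Longrightarrow> PT (v@[j]) = (\<Union>t\<in>grp (length v div 2) j. cell (ext (length v div 2) (st v) t))"
proof -
  assume ev: "even (length v)"
  have "length (v@[j]) div 2 = length v div 2" using ev by simp
  then show ?thesis unfolding PT_def using ev st_snoc1[OF ev] by simp
qed

lemma PT_son2: "even (length v) \<Longrightarrow> PT (v@[j,r]) = cell (ext (length v div 2) (st v) (enm (length v div 2) j r))"
  using PT_even[of "v@[j,r]"] st_snoc2[of v j r] by simp

lemma grp_TT: "grp n j \<subseteq> TT n" unfolding grp_def by auto

lemma grp_union: "(\<Union>j. grp n j) = TT n" unfolding grp_def by auto

lemma PT_union: "PT v = (\<Union>k. PT (v@[k]))"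
proof (cases "even (length v)")
  case True
  let ?n = "length v div 2"
  have "(\<Union>k. PT (v@[k])) = (\<Union>k. \<Union>t\<in>grp ?n k. cell (ext ?n (st v) t))" using PT_odd[OF True] by simp
  also have "\<dots> = (\<Union>t\<in>(\<Union>k. grp ?n k). cell (ext ?n (st v) t))" by blast
  also have "\<dots> = (\<Union>t\<in>TT ?n. cell (ext ?n (st v) t))" unfolding grp_union ..
  also have "\<dots> = cell (st v)" by (rule cell_split[symmetric])
  finally show ?thesis using PT_even[OF True] by simp
next
  case False
  then obtain w j where v: "v = w@[j]" by (metis append_butlast_last_id even_zero list.size(3))
  have ev: "even (length w)" using False v by simp
  let ?n = "length w div 2"
  have "(\<Union>k. PT (v@[k])) = (\<Union>k. cell (ext ?n (st w) (enm ?n j k)))" unfolding v using PT_son2[OF ev] by simp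
  also have "\<dots> = (\<Union>t\<in>range (enm ?n j). cell (ext ?n (st w) t))" by simp
  also have "\<dots> = (\<Union>t\<in>grp ?n j. cell (ext ?n (st w) t))" using enm_bij[of ?n j] unfolding bij_betw_def by simp
  also have "\<dots> = PT v" unfolding v by (rule PT_odd[OF ev, symmetric])
  finally show ?thesis by simp
qed

lemma PT_disj: assumes "k \<noteq> l" shows "PT (v@[k]) \<inter> PT (v@[l]) = {}"
proof (cases "even (length v)")
  case True
  let ?n = "length v div 2"
  show ?thesis
  proof (rule equals0I)
    fix x assume "x \<in> PT (v@[k]) \<inter> PT (v@[l])"
    then obtain t t' where t: "t \<in> grp ?n k" "x \<in> cell (ext ?n (st v) t)"
      and t': "t' \<in> grp ?n l" "x \<in> cell (ext ?n (st v) t')"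
      unfolding PT_odd[OF True] by blast
    have "t \<noteq> t'" using t(1) t'(1) assms unfolding grp_def by auto
    then show False using cell_disj[of t ?n t' "st v"] t t' grp_TT by blast
  qed
next
  case False
  then obtain w j where v: "v = w@[j]" by (metis append_butlast_last_id even_zero list.size(3))
  have ev: "even (length w)" using False v by simp
  let ?n = "length w div 2"
  have inj: "enm ?n j k \<noteq> enm ?n j l" using enm_bij[of ?n j] assms unfolding bij_betw_def inj_on_def by blast
  have "enm ?n j k \<in> TT ?n" "enm ?n j l \<in> TT ?n" using enm_bij[of ?n j] grp_TT unfolding bij_betw_def by blast+
  then show ?thesis unfolding v using PT_son2[OF ev] cell_disj inj by simp
qed

lemma ext_fin: "finite {\<alpha>. \<sigma> \<alpha> \<noteq> []} \<Longrightarrow> finite {\<alpha>. ext n \<sigma> t \<alpha> \<noteq> []}"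
proof -
  assume f: "finite {\<alpha>. \<sigma> \<alpha> \<noteq> []}"
  have "{\<alpha>. ext n \<sigma> t \<alpha> \<noteq> []} \<subseteq> {\<alpha>. \<sigma> \<alpha> \<noteq> []} \<union> act n" unfolding ext_def by auto
  then show ?thesis using f act_fin by (meson finite_UnI finite_subset)
qed

lemma PT_open: "openin (product_topology X A) (PT v)"
proof (cases "even (length v)")
  case True show ?thesis unfolding PT_even[OF True] by (rule cell_open[OF st_fin])
next
  case False
  then have "PT v = (\<Union>t\<in>grp (length v div 2) (last v). cell (ext (length v div 2) (st v) t))"
    unfolding PT_def by simp
  moreover have "openin (product_topology X A) (\<Union>t\<in>grp (length v div 2) (last v). cell (ext (length v div 2) (st v) t))"
    by (rule openin_Union) (use cell_open[OF ext_fin[OF st_fin]] in blast)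
  ultimately show ?thesis by simp
qed

lemma PT_root: "PT [] = topspace (product_topology X A)"
proof -
  have "st [] = (\<lambda>_. [])" unfolding st_def by simp
  then have "PT [] = PiE A (\<lambda>\<alpha>. F \<alpha> [])" unfolding PT_def cell_def by simp
  also have "\<dots> = PiE A (\<lambda>\<alpha>. topspace (X \<alpha>))" by (rule PiE_cong) (rule ST_root[OF st])
  finally show ?thesis by (simp add: topspace_product_topology)
qed

lemma PT_mono: "PT (v@u) \<subseteq> PT v"
proof (induction u rule: rev_induct)
  case Nil then show ?case by simp
next
  case (snoc x xs)
  have "PT ((v @ xs) @ [x]) \<subseteq> (\<Union>k. PT ((v@xs)@[k]))" by (rule UN_upper) simp
  also have "\<dots> = PT (v@xs)" by (rule PT_union[symmetric])
  finally show ?case using snoc by simp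
qed

lemma st_step: "st (map g [0..<2 * Suc N]) \<alpha> = st (map g [0..<2*N]) \<alpha> @
   (if \<alpha> \<in> act N then [fst (enm N (g (2*N)) (g (2*N+1)) \<alpha>), snd (enm N (g (2*N)) (g (2*N+1)) \<alpha>)] else [])"
proof -
  have m: "map g [0..<2 * Suc N] = map g [0..<2*N] @ [g (2*N), g (2*N+1)]" by (simp add: numeral_2_eq_2)
  have "even (length (map g [0..<2*N]))" by simp
  from st_snoc2[OF this, of "g (2*N)" "g (2*N+1)"] show ?thesis unfolding m ext_def by simp
qed

lemma st_prefix: "N \<le> M \<Longrightarrow> \<exists>u. st (map g [0..<2*M]) \<alpha> = st (map g [0..<2*N]) \<alpha> @ u"
proof (induction M rule: dec_induct)
  case base then show ?case by (intro exI[of _ "[]"]) simp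
next
  case (step M)
  then obtain u where "st (map g [0..<2*M]) \<alpha> = st (map g [0..<2*N]) \<alpha> @ u" by blast
  then show ?case using st_step[of g M \<alpha>] by (metis append.assoc)
qed

lemma PT_branch: "\<exists>p. (\<Inter>n. PT (map g [0..<n])) = {p}"
proof -
  define \<sigma> where "\<sigma> N = st (map g [0..<2*N])" for N
  have even_eq: "(\<Inter>n. PT (map g [0..<n])) = (\<Inter>N. cell (\<sigma> N))"
  proof
    show "(\<Inter>n. PT (map g [0..<n])) \<subseteq> (\<Inter>N. cell (\<sigma> N))"
    proof (rule INT_greatest)
      fix N
      have "(\<Inter>n. PT (map g [0..<n])) \<subseteq> PT (map g [0..<2*N])" by (rule INT_lower) simp
      then show "(\<Inter>n. PT (map g [0..<n])) \<subseteq> cell (\<sigma> N)" unfolding \<sigma>_def using PT_even[of "map g [0..<2*N]"] by simp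
    qed
    show "(\<Inter>N. cell (\<sigma> N)) \<subseteq> (\<Inter>n. PT (map g [0..<n]))"
    proof (rule INT_greatest)
      fix n
      have "[0..<2*n] = [0..<n] @ [n..<2*n]" using upt_add_eq_append[of 0 n n] by (simp add: mult_2)
      then have eq: "map g [0..<2*n] = map g [0..<n] @ map g [n..<2*n]" by simp
      have "PT (map g [0..<n] @ map g [n..<2*n]) \<subseteq> PT (map g [0..<n])" by (rule PT_mono)
      then have "PT (map g [0..<2*n]) \<subseteq> PT (map g [0..<n])" unfolding eq .
      moreover have "(\<Inter>N. cell (\<sigma> N)) \<subseteq> cell (\<sigma> n)" by (rule INT_lower) simp
      ultimately show "(\<Inter>N. cell (\<sigma> N)) \<subseteq> PT (map g [0..<n])"
        unfolding \<sigma>_def using PT_even[of "map g [0..<2*n]"] by simp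
    qed
  qed
  have coord: "\<exists>q. (\<Inter>N. F \<alpha> (\<sigma> N \<alpha>)) = {q}" if a: "\<alpha> \<in> A" for \<alpha>
  proof (rule chain_inter[OF st[OF a]])
    fix N M :: nat assume "N \<le> M" then show "\<exists>t. \<sigma> M \<alpha> = \<sigma> N \<alpha> @ t" unfolding \<sigma>_def by (rule st_prefix)
  next
    fix k
    obtain m where m: "e m = \<alpha>" using a e by blast
    have "2 * (length (map g [0..<2*(m+k)]) div 2 - m) \<le> length (\<sigma> (m+k) \<alpha>)"
      unfolding \<sigma>_def using st_len[OF _ m, of "map g [0..<2*(m+k)]"] by simp
    then have "k \<le> length (\<sigma> (m+k) \<alpha>)" by simp
    then show "\<exists>M. k \<le> length (\<sigma> M \<alpha>)" by blast
  qed
  then have "\<forall>\<alpha>\<in>A. \<exists>q. (\<Inter>N. F \<alpha> (\<sigma> N \<alpha>)) = {q}" by blast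
  then obtain q where q: "\<forall>\<alpha>\<in>A. (\<Inter>N. F \<alpha> (\<sigma> N \<alpha>)) = {q \<alpha>}" by (rule bchoice[THEN exE])
  have "(\<Inter>N. cell (\<sigma> N)) = PiE A (\<lambda>\<alpha>. \<Inter>N. F \<alpha> (\<sigma> N \<alpha>))"
    unfolding cell_def by (auto simp: PiE_iff)
  also have "\<dots> = PiE A (\<lambda>\<alpha>. {restrict q A \<alpha>})" by (rule PiE_cong) (simp add: q)
  also have "\<dots> = {restrict q A}" by (rule PiE_singleton[OF restrict_extensional])
  finally show ?thesis using even_eq by (intro exI[of _ "restrict q A"]) simp
qed

lemma node_exists: "p \<in> PT [] \<Longrightarrow> \<exists>v. length v = n \<and> p \<in> PT v"
proof (induction n)
  case 0 then show ?case by simp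
next
  case (Suc n)
  then obtain v where v: "length v = n" "p \<in> PT v" by blast
  then have "p \<in> (\<Union>k. PT (v@[k]))" using PT_union[of v] by simp
  then obtain k where "p \<in> PT (v@[k])" by blast
  then show ?case using v(1) by (intro exI[of _ "v@[k]"]) simp
qed

lemma PT_grow: assumes p: "p \<in> topspace (product_topology X A)" and U: "openin (product_topology X A) U" "p \<in> U"
  shows "\<exists>z N. p \<in> PT z \<and> PT (z@[N]) \<noteq> {} \<and> (\<forall>j\<ge>N. PT (z@[j]) \<subseteq> U)"
proof -
  obtain W where W: "finite {\<alpha> \<in> A. W \<alpha> \<noteq> topspace (X \<alpha>)}" "\<forall>\<alpha>\<in>A. openin (X \<alpha>) (W \<alpha>)"
      "p \<in> PiE A W" "PiE A W \<subseteq> U"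
    using bspec[OF iffD1[OF openin_product_topology_alt U(1)] U(2)] by blast
  define K where "K = {\<alpha> \<in> A. W \<alpha> \<noteq> topspace (X \<alpha>)}"
  have K: "finite K" "K \<subseteq> A" using W(1) unfolding K_def by auto
  have "\<forall>\<alpha>\<in>A. \<exists>k. e k = \<alpha>" using e by blast
  then obtain m where m: "\<forall>\<alpha>\<in>A. e (m \<alpha>) = \<alpha>" by metis
  have pa: "p \<alpha> \<in> topspace (X \<alpha>)" "p \<alpha> \<in> W \<alpha>" if "\<alpha> \<in> A" for \<alpha>
    using p W(3) that by (auto simp: topspace_product_topology PiE_iff)
  have "\<forall>\<alpha>\<in>K. \<exists>D. \<forall>s. D \<le> length s \<and> even (length s) \<and> p \<alpha> \<in> F \<alpha> s \<longrightarrow> (\<exists>N. \<forall>k\<ge>N. F \<alpha> (s@[k]) \<subseteq> W \<alpha>)"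
  proof
    fix \<alpha> assume "\<alpha> \<in> K"
    then have a: "\<alpha> \<in> A" using K by blast
    show "\<exists>D. \<forall>s. D \<le> length s \<and> even (length s) \<and> p \<alpha> \<in> F \<alpha> s \<longrightarrow> (\<exists>N. \<forall>k\<ge>N. F \<alpha> (s@[k]) \<subseteq> W \<alpha>)"
      by (rule ST_grow[OF st[OF a] pa(1)[OF a] _ pa(2)[OF a]]) (use W(2) a in blast)
  qed
  then obtain D where D: "\<forall>\<alpha>\<in>K. \<forall>s. D \<alpha> \<le> length s \<and> even (length s) \<and> p \<alpha> \<in> F \<alpha> s \<longrightarrow> (\<exists>N. \<forall>k\<ge>N. F \<alpha> (s@[k]) \<subseteq> W \<alpha>)"
    by metis
  define Nn where "Nn = Max (insert 0 ((\<lambda>\<alpha>. m \<alpha> + D \<alpha>) ` K))"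
  have Nn: "m \<alpha> + D \<alpha> \<le> Nn" if "\<alpha> \<in> K" for \<alpha> unfolding Nn_def using K(1) that by simp
  have "p \<in> PT []" using p PT_root by simp
  then obtain v where v: "length v = 2*Nn" "p \<in> PT v" using node_exists by blast
  have ev: "even (length v)" using v(1) by simp
  have vd: "length v div 2 = Nn" using v(1) by simp
  let ?\<sigma> = "st v"
  have pc: "p \<in> cell ?\<sigma>" using v(2) PT_even[OF ev] by simp
  have "\<forall>\<alpha>\<in>K. \<exists>N. \<forall>k\<ge>N. F \<alpha> (?\<sigma> \<alpha> @ [k]) \<subseteq> W \<alpha>"
  proof
    fix \<alpha> assume aK: "\<alpha> \<in> K"
    then have a: "\<alpha> \<in> A" using K by blast
    have sl: "2 * (Nn - m \<alpha>) \<le> length (?\<sigma> \<alpha>) \<and> even (length (?\<sigma> \<alpha>))"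
      using st_len[OF ev, of "m \<alpha>" \<alpha>] m a vd by simp
    have "D \<alpha> \<le> length (?\<sigma> \<alpha>)" using sl Nn[OF aK] by linarith
    moreover have "p \<alpha> \<in> F \<alpha> (?\<sigma> \<alpha>)" using pc a unfolding cell_def by (auto simp: PiE_iff)
    ultimately show "\<exists>N. \<forall>k\<ge>N. F \<alpha> (?\<sigma> \<alpha> @ [k]) \<subseteq> W \<alpha>" using D aK sl by blast
  qed
  then obtain NN where NN: "\<forall>\<alpha>\<in>K. \<forall>k\<ge>NN \<alpha>. F \<alpha> (?\<sigma> \<alpha> @ [k]) \<subseteq> W \<alpha>" by metis
  define M where "M = Max (insert 0 (NN ` K))"
  have M: "NN \<alpha> \<le> M" if "\<alpha> \<in> K" for \<alpha> unfolding M_def using K(1) that by simp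
  have ne: "PT (v@[M]) \<noteq> {}"
  proof -
    obtain t where "t \<in> grp Nn M" using grp_infinite[of Nn M] by (metis finite.emptyI ex_in_conv)
    then have "cell (ext Nn ?\<sigma> t) \<subseteq> PT (v@[M])" unfolding PT_odd[OF ev] vd by blast
    then show ?thesis using cell_ne by blast
  qed
  have sub: "PT (v@[j]) \<subseteq> U" if j: "M \<le> j" for j
  proof -
    have "PT (v@[j]) \<subseteq> PiE A W"
    proof
      fix x assume "x \<in> PT (v@[j])"
      then obtain t where t: "t \<in> grp Nn j" "x \<in> cell (ext Nn ?\<sigma> t)" unfolding PT_odd[OF ev] vd by blast
      have xa: "x \<alpha> \<in> F \<alpha> (ext Nn ?\<sigma> t \<alpha>)" if "\<alpha> \<in> A" for \<alpha>
        using t(2) that unfolding cell_def by (auto simp: PiE_iff)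
      show "x \<in> PiE A W"
      proof (rule PiE_I)
        fix \<alpha> assume a: "\<alpha> \<in> A"
        show "x \<alpha> \<in> W \<alpha>"
        proof (cases "\<alpha> \<in> K")
          case True
          have "m \<alpha> \<le> Nn" using Nn[OF True] by simp
          then have act: "\<alpha> \<in> act Nn" using act_mono m a by metis
          have ge: "j \<le> fst (t \<alpha>)" using grp_mn[OF t(1) act] by simp
          have "x \<alpha> \<in> F \<alpha> ((?\<sigma> \<alpha> @ [fst (t \<alpha>)]) @ [snd (t \<alpha>)])" using xa[OF a] act unfolding ext_def by simp
          also have "\<dots> \<subseteq> F \<alpha> (?\<sigma> \<alpha> @ [fst (t \<alpha>)])" by (rule F_nest[OF a])
          also have "\<dots> \<subseteq> W \<alpha>" using NN True M[OF True] j ge by auto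
          finally show ?thesis .
        next
          case False
          then have "W \<alpha> = topspace (X \<alpha>)" using a unfolding K_def by blast
          moreover have "F \<alpha> (ext Nn ?\<sigma> t \<alpha>) \<subseteq> topspace (X \<alpha>)" by (rule ST_sub_top[OF st[OF a]])
          ultimately show ?thesis using xa[OF a] by blast
        qed
      next
        fix \<alpha> assume "\<alpha> \<notin> A"
        then show "x \<alpha> = undefined" using t(2) unfolding cell_def by (auto simp: PiE_iff extensional_def)
      qed
    qed
    then show ?thesis using W(4) by blast
  qed
  have "\<forall>j\<ge>M. PT (v@[j]) \<subseteq> U" using sub by blast
  then show ?thesis using v(2) ne by blast
qed

lemma result: "has_pi_tree (product_topology X A)"
proof (rule pi_tree_intro[of _ PT])
  show "\<And>v. openin (product_topology X A) (PT v)" by (rule PT_open)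
  show "PT [] = topspace (product_topology X A)" by (rule PT_root)
  show "\<And>v. PT v = (\<Union>k. PT (v @ [k]))" by (rule PT_union)
  show "\<And>v k l. k \<noteq> l \<Longrightarrow> PT (v @ [k]) \<inter> PT (v @ [l]) = {}" by (rule PT_disj)
  show "\<And>g. \<exists>p. (\<Inter>n. PT (map g [0..<n])) = {p}" by (rule PT_branch)
  show "\<And>p U. p \<in> topspace (product_topology X A) \<Longrightarrow> openin (product_topology X A) U \<Longrightarrow> p \<in> U \<Longrightarrow>
     \<exists>z N. p \<in> PT z \<and> PT (z @ [N]) \<noteq> {} \<and> (\<forall>j\<ge>N. PT (z @ [j]) \<subseteq> U)" by (rule PT_grow)
qed

end


theorem corollary20:
  fixes A :: "'a set" and X :: "'a \<Rightarrow> 'b topology"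
  assumes "A \<noteq> {}" and "countable A"
    and "\<forall>\<alpha>\<in>A. X \<alpha> homeomorphic_space baire_space \<or>
           (\<exists>S. countable (UNIV - S) \<and> X \<alpha> homeomorphic_space subtopology sorgenfrey S)"
  shows "has_pi_tree (product_topology X A)"
proof -
  have "\<forall>\<alpha>\<in>A. \<exists>G. ST (X \<alpha>) G"
  proof
    fix \<alpha> assume a: "\<alpha> \<in> A"
    have h: "X \<alpha> homeomorphic_space baire_space \<or>
           (\<exists>S. countable (UNIV - S) \<and> X \<alpha> homeomorphic_space subtopology sorgenfrey S)"
      by (rule bspec[OF assms(3) a])
    then show "\<exists>G. ST (X \<alpha>) G"
    proof (elim disjE exE conjE)
      assume h1: "X \<alpha> homeomorphic_space baire_space"
      then have "baire_space homeomorphic_space X \<alpha>" by (rule homeomorphic_space_sym[THEN iffD1])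
      then show ?thesis by (rule ST_homeo[OF ST_baire])
    next
      fix S assume h1: "countable (UNIV - S)" and h2: "X \<alpha> homeomorphic_space subtopology sorgenfrey S"
      have c: "countable (- S)" using h1 by (simp add: Compl_eq_Diff_UNIV)
      have "subtopology sorgenfrey S homeomorphic_space X \<alpha>" using h2 by (rule homeomorphic_space_sym[THEN iffD1])
      then show ?thesis by (rule ST_homeo[OF ST_sorg[OF c]])
    qed
  qed
  then obtain F where F: "\<forall>\<alpha>\<in>A. ST (X \<alpha>) (F \<alpha>)" by (rule bchoice[THEN exE])
  define e where "e = from_nat_into A"
  have e: "range e = A" unfolding e_def by (rule range_from_nat_into[OF assms(1,2)])
  have pt: "prodtree A X F e"
  proof (unfold_locales)
    fix \<alpha> assume "\<alpha> \<in> A" then show "ST (X \<alpha>) (F \<alpha>)" using F by (rule bspec[rotated])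
  next
    show "range e = A" by (rule e)
  qed
  show ?thesis by (rule prodtree.result[OF pt])
qed

end
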